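(* Let $\mathbb{F}$ be either $\mathbb{Q}$ or $\mathbb{Z}_q$ for a prime $q$, and fix a Frege proof system. The non-commutative IPS over $\mathbb{F}$, with refutations written as non-commutative formulas, polynomially simulates Frege: there is a polynomial $p$ such that for every propositional tautology $T$ in variables $x_1,\dots,x_n$, if $T$ has a Frege proof of size $S$, then there is a non-commutative IPS certificate over $\mathbb{F}$ refuting the system consisting of the single equation $\mathrm{tr}(\neg T)=0$ (together with the Boolean and commutator axioms) whose non-commutative formula size is at most $p(S)$. In particular, if $T$ has a polynomial-size Frege proof then such a certificate of polynomial non-commutative formula size exists.
   Context: A Frege proof system is a propositional proof system with finitely many sound axiom schemes and inference rules (each rule $\frac{A_1,\dots,A_k}{A_0}$ applied via substitution instances), implicationally complete, whose lines are Boolean formulas over $\lor,\land,\neg$; the size of a proof is the total size of its formulas. A non-commutative formula over $\mathbb{F}$ is a fan-in-two rooted tree whose leaves are labeled by variables or field elements and whose internal nodes are $+$ or $\times$ gates, with the children of each $\times$ gate ordered; it computes a polynomial in the free algebra $\mathbb{F}\langle x_1,x_2,\dots\rangle$ (non-commuting variables). Its size is its number of nodes. Translation $\mathrm{tr}$: $\mathrm{tr}(x_i)=x_i$, $\mathrm{tr}(\mathsf{false})=1$, $\mathrm{tr}(\mathsf{true})=0$, $\mathrm{tr}(\neg T_1)=1-\mathrm{tr}(T_1)$, $\mathrm{tr}(T_1\lor T_2)=\mathrm{tr}(T_1)\cdot\mathrm{tr}(T_2)$, $\mathrm{tr}(T_1\land T_2)=1-(1-\mathrm{tr}(T_1))\cdot(1-\mathrm{tr}(T_2))$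 (so $0$ represents true). Non-commutative IPS: given non-commutative polynomials $F_1,\dots,F_m\in\mathbb{F}\langle x_1,\dots,x_n\rangle$ that include the Boolean axioms $x_i(1-x_i)$ ($1\le i\le n$) and the commutator axioms $x_ix_j-x_jx_i$ ($1\le i<j\le n$) and have no common $0$-$1$ solution, a certificate (refutation) is a non-commutative polynomial $\mathfrak{F}(\bar x,y_1,\dots,y_m)\in\mathbb{F}\langle\bar x,\bar y\rangle$ with $\mathfrak{F}(\bar x,\bar 0)=0$ and $\mathfrak{F}(\bar x,F_1(\bar x),\dots,F_m(\bar x))=1$ as identities in $\mathbb{F}\langle \bar x\rangle$. Its size is the minimal size of a non-commutative formula computing it. *)

theory Defs
  imports "HOL-Computational_Algebra.Polynomial" "Berlekamp_Zassenhaus.Finite_Field"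
begin

datatype fm = FVar nat | FTrue | FFalse | FNot fm | FOr fm fm | FAnd fm fm

primrec feval :: "(nat \<Rightarrow> bool) \<Rightarrow> fm \<Rightarrow> bool" where
  "feval a (FVar i) = a i"
| "feval a FTrue = True"
| "feval a FFalse = False"
| "feval a (FNot A) = (\<not> feval a A)"
| "feval a (FOr A B) = (feval a A \<or> feval a B)"
| "feval a (FAnd A B) = (feval a A \<and> feval a B)"

primrec atoms :: "fm \<Rightarrow> nat set" where
  "atoms (FVar i) = {i}"
| "atoms FTrue = {}"
| "atoms FFalse = {}"
| "atoms (FNot A) = atoms A"
| "atoms (FOr A B) = atoms A \<union> atoms B"
| "atoms (FAnd A B) = atoms A \<union> atoms B"

primrec fsize :: "fm \<Rightarrow> nat" where
  "fsize (FVar i) = 1"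
| "fsize FTrue = 1"
| "fsize FFalse = 1"
| "fsize (FNot A) = 1 + fsize A"
| "fsize (FOr A B) = 1 + fsize A + fsize B"
| "fsize (FAnd A B) = 1 + fsize A + fsize B"

primrec fsubst :: "(nat \<Rightarrow> fm) \<Rightarrow> fm \<Rightarrow> fm" where
  "fsubst \<sigma> (FVar i) = \<sigma> i"
| "fsubst \<sigma> FTrue = FTrue"
| "fsubst \<sigma> FFalse = FFalse"
| "fsubst \<sigma> (FNot A) = FNot (fsubst \<sigma> A)"
| "fsubst \<sigma> (FOr A B) = FOr (fsubst \<sigma> A) (fsubst \<sigma> B)"
| "fsubst \<sigma> (FAnd A B) = FAnd (fsubst \<sigma> A) (fsubst \<sigma> B)"

definition tautology :: "fm \<Rightarrow> bool" where
  "tautology A \<longleftrightarrow> (\<forall>a. feval a A)"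

text \<open>A rule A_1,...,A_k / A_0 is a pair (premises, conclusion); axiom schemes are
  rules with no premises.\<close>
type_synonym rule = "fm list \<times> fm"

definition sound_rule :: "rule \<Rightarrow> bool" where
  "sound_rule r \<longleftrightarrow> (\<forall>a. (\<forall>A \<in> set (fst r). feval a A) \<longrightarrow> feval a (snd r))"

definition derivation :: "rule set \<Rightarrow> fm set \<Rightarrow> fm list \<Rightarrow> bool" where
  "derivation R \<Gamma> \<pi> \<longleftrightarrow> (\<forall>k < length \<pi>. \<pi> ! k \<in> \<Gamma> \<or>
     (\<exists>r \<in> R. \<exists>\<sigma>. fsubst \<sigma> (snd r) = \<pi> ! k \<and>
        (\<forall>P \<in> set (fst r). \<exists>j < k. \<pi> ! j = fsubst \<sigma> P)))"

definition frege_system :: "rule set \<Rightarrow> bool" where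
  "frege_system R \<longleftrightarrow> finite R \<and> (\<forall>r \<in> R. sound_rule r) \<and>
     (\<forall>\<Gamma> A. finite \<Gamma> \<longrightarrow> (\<forall>a. (\<forall>B \<in> \<Gamma>. feval a B) \<longrightarrow> feval a A) \<longrightarrow>
        (\<exists>\<pi>. \<pi> \<noteq> [] \<and> last \<pi> = A \<and> derivation R \<Gamma> \<pi>))"

definition frege_proof :: "rule set \<Rightarrow> fm list \<Rightarrow> fm \<Rightarrow> bool" where
  "frege_proof R \<pi> A \<longleftrightarrow> \<pi> \<noteq> [] \<and> last \<pi> = A \<and> derivation R {} \<pi>"

definition proof_size :: "fm list \<Rightarrow> nat" where
  "proof_size \<pi> = sum_list (map fsize \<pi>)"

datatype ('a, 'v) ncf = NVar 'v | NConst 'a | NAdd "('a, 'v) ncf" "('a, 'v) ncf"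
  | NMul "('a, 'v) ncf" "('a, 'v) ncf"

primrec ncf_size :: "('a, 'v) ncf \<Rightarrow> nat" where
  "ncf_size (NVar v) = 1"
| "ncf_size (NConst c) = 1"
| "ncf_size (NAdd f g) = 1 + ncf_size f + ncf_size g"
| "ncf_size (NMul f g) = 1 + ncf_size f + ncf_size g"

primrec ncf_vars :: "('a, 'v) ncf \<Rightarrow> 'v set" where
  "ncf_vars (NVar v) = {v}"
| "ncf_vars (NConst c) = {}"
| "ncf_vars (NAdd f g) = ncf_vars f \<union> ncf_vars g"
| "ncf_vars (NMul f g) = ncf_vars f \<union> ncf_vars g"

text \<open>Elements of the free algebra over variables 'v are represented by their
  coefficient functions on words (monomials = lists of variables).\<close>
primrec ncpoly :: "('a::comm_ring_1, 'v) ncf \<Rightarrow> 'v list \<Rightarrow> 'a" where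
  "ncpoly (NVar v) = (\<lambda>w. if w = [v] then 1 else 0)"
| "ncpoly (NConst c) = (\<lambda>w. if w = [] then c else 0)"
| "ncpoly (NAdd f g) = (\<lambda>w. ncpoly f w + ncpoly g w)"
| "ncpoly (NMul f g) = (\<lambda>w. \<Sum>i\<in>{0..length w}. ncpoly f (take i w) * ncpoly g (drop i w))"

definition ncpoly_zero :: "'v list \<Rightarrow> 'a::comm_ring_1" where
  "ncpoly_zero = (\<lambda>w. 0)"

definition ncpoly_one :: "'v list \<Rightarrow> 'a::comm_ring_1" where
  "ncpoly_one = (\<lambda>w. if w = [] then 1 else 0)"

primrec ncsubst :: "('v \<Rightarrow> ('a, 'u) ncf) \<Rightarrow> ('a, 'v) ncf \<Rightarrow> ('a, 'u) ncf" where
  "ncsubst \<sigma> (NVar v) = \<sigma> v"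
| "ncsubst \<sigma> (NConst c) = NConst c"
| "ncsubst \<sigma> (NAdd f g) = NAdd (ncsubst \<sigma> f) (ncsubst \<sigma> g)"
| "ncsubst \<sigma> (NMul f g) = NMul (ncsubst \<sigma> f) (ncsubst \<sigma> g)"

definition ncminus1 :: "('a::comm_ring_1, 'v) ncf \<Rightarrow> ('a, 'v) ncf" where
  "ncminus1 f = NAdd (NConst 1) (NMul (NConst (-1)) f)"

section \<open>Translation tr (0 represents true)\<close>

primrec tr :: "fm \<Rightarrow> ('a::comm_ring_1, nat) ncf" where
  "tr (FVar i) = NVar i"
| "tr FFalse = NConst 1"
| "tr FTrue = NConst 0"
| "tr (FNot A) = ncminus1 (tr A)"
| "tr (FOr A B) = NMul (tr A) (tr B)"
| "tr (FAnd A B) = ncminus1 (NMul (ncminus1 (tr A)) (ncminus1 (tr B)))"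

text \<open>Indices of the axioms: the single equation tr(not T) = 0, the Boolean axioms
  x_i(1-x_i), 1 <= i <= n, and the commutator axioms x_i x_j - x_j x_i, 1 <= i < j <= n.\<close>
datatype axidx = AxT | AxBool nat | AxComm nat nat

datatype cvar = X nat | Y axidx

fun valid_ax :: "nat \<Rightarrow> axidx \<Rightarrow> bool" where
  "valid_ax n AxT = True"
| "valid_ax n (AxBool i) = (1 \<le> i \<and> i \<le> n)"
| "valid_ax n (AxComm i j) = (1 \<le> i \<and> i < j \<and> j \<le> n)"

fun ax_poly :: "fm \<Rightarrow> axidx \<Rightarrow> ('a::comm_ring_1, nat) ncf" where
  "ax_poly T AxT = tr (FNot T)"
| "ax_poly T (AxBool i) = NMul (NVar i) (ncminus1 (NVar i))"
| "ax_poly T (AxComm i j) = NAdd (NMul (NVar i) (NVar j)) (NMul (NConst (-1)) (NMul (NVar j) (NVar i)))"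

text \<open>Phi is a non-commutative formula in variables x_1..x_n and the placeholder
  variables y_a (a a valid axiom index) computing a certificate:
  Phi(x, 0) = 0 and Phi(x, F_1(x), ..., F_m(x)) = 1 in the free algebra.\<close>
definition nc_ips_cert :: "nat \<Rightarrow> fm \<Rightarrow> ('a::comm_ring_1, cvar) ncf \<Rightarrow> bool" where
  "nc_ips_cert n T \<Phi> \<longleftrightarrow>
     (\<forall>v \<in> ncf_vars \<Phi>. case v of X i \<Rightarrow> 1 \<le> i \<and> i \<le> n | Y a \<Rightarrow> valid_ax n a) \<and>
     ncpoly (ncsubst (\<lambda>v. case v of X i \<Rightarrow> NVar i | Y a \<Rightarrow> NConst 0) \<Phi>) = ncpoly_zero \<and>
     ncpoly (ncsubst (\<lambda>v. case v of X i \<Rightarrow> NVar i | Y a \<Rightarrow> ax_poly T a) \<Phi>) = ncpoly_one"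

end

theory Submission
  imports Defs "HOL-Library.Poly_Mapping"
begin

datatype 'v wrd = W "'v list"

instantiation wrd :: (type) monoid_add
begin
definition zero_wrd :: "'v wrd" where "zero_wrd = W []"
fun plus_wrd :: "'v wrd \<Rightarrow> 'v wrd \<Rightarrow> 'v wrd" where "plus_wrd (W a) (W b) = W (a @ b)"
instance
proof
  fix a b c :: "'v wrd"
  show "a + b + c = a + (b + c)" by (cases a; cases b; cases c) simp
  show "0 + a = a" by (cases a) (simp add: zero_wrd_def)
  show "a + 0 = a" by (cases a) (simp add: zero_wrd_def)
qed
end

primrec emb :: "('a::comm_ring_1, 'v) ncf \<Rightarrow> ('v wrd \<Rightarrow>\<^sub>0 'a)" where
  "emb (NVar v) = Poly_Mapping.single (W [v]) 1"
| "emb (NConst c) = Poly_Mapping.single (W []) c"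
| "emb (NAdd f g) = emb f + emb g"
| "emb (NMul f g) = emb f * emb g"

lemma lookup_mult_wrd:
  fixes p q :: "'v wrd \<Rightarrow>\<^sub>0 'a::comm_ring_1"
  shows "Poly_Mapping.lookup (p * q) (W w) = (\<Sum>i\<in>{0..length w}. Poly_Mapping.lookup p (W (take i w)) * Poly_Mapping.lookup q (W (drop i w)))"
proof -
  have inner: "Sum_any (\<lambda>qq. Poly_Mapping.lookup q qq when W w = l + qq) =
     (if (\<exists>i \<le> length w. l = W (take i w)) then Poly_Mapping.lookup q (W (drop (length (case l of W u \<Rightarrow> u)) w)) else 0)" for l
  proof (cases l)
    case (W u)
    show ?thesis
    proof (cases "\<exists>i \<le> length w. l = W (take i w)")
      case True
      then obtain i where i: "i \<le> length w" "u = take i w" using W by auto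
      have "(\<lambda>qq. Poly_Mapping.lookup q qq when W w = l + qq) = (\<lambda>qq. if qq = W (drop i w) then Poly_Mapping.lookup q qq else 0)"
      proof
        fix qq show "(Poly_Mapping.lookup q qq when W w = l + qq) = (if qq = W (drop i w) then Poly_Mapping.lookup q qq else 0)"
          using i W by (cases qq) (auto simp: when_def, metis append_take_drop_id same_append_eq)
      qed
      then have "Sum_any (\<lambda>qq. Poly_Mapping.lookup q qq when W w = l + qq) = Poly_Mapping.lookup q (W (drop i w))"
        by (simp only:) simp
      then show ?thesis using True i W by simp
    next
      case False
      have "(\<lambda>qq. Poly_Mapping.lookup q qq when W w = l + qq) = (\<lambda>qq. 0)"
      proof
        fix qq show "(Poly_Mapping.lookup q qq when W w = l + qq) = 0"
        proof (cases qq)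
          case (W x)
          show ?thesis
          proof (cases "w = u @ x")
            case True
            then have "\<exists>i \<le> length w. l = W (take i w)" using \<open>l = W u\<close> by (intro exI[of _ "length u"]) simp
            then show ?thesis using False by blast
          qed (simp add: W \<open>l = W u\<close> when_def)
        qed
      qed
      then have "Sum_any (\<lambda>qq. Poly_Mapping.lookup q qq when W w = l + qq) = 0"
        by (simp only:) simp
      then show ?thesis using False by auto
    qed
  qed
  have "Poly_Mapping.lookup (p * q) (W w) = Sum_any (\<lambda>l. Poly_Mapping.lookup p l * Sum_any (\<lambda>qq. Poly_Mapping.lookup q qq when W w = l + qq))"
    by (simp add: lookup_mult)
  also have "\<dots> = Sum_any (\<lambda>l. if (\<exists>i \<le> length w. l = W (take i w)) then Poly_Mapping.lookup p l * Poly_Mapping.lookup q (W (drop (length (case l of W u \<Rightarrow> u)) w)) else 0)"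
    by (simp add: inner if_distrib cong: if_cong)
  also have "\<dots> = (\<Sum>l\<in>(\<lambda>i. W (take i w)) ` {0..length w}. if (\<exists>i \<le> length w. l = W (take i w)) then Poly_Mapping.lookup p l * Poly_Mapping.lookup q (W (drop (length (case l of W u \<Rightarrow> u)) w)) else 0)"
    by (rule Sum_any.expand_superset) auto
  also have "\<dots> = (\<Sum>i\<in>{0..length w}. Poly_Mapping.lookup p (W (take i w)) * Poly_Mapping.lookup q (W (drop i w)))"
  proof -
    have inj: "inj_on (\<lambda>i. W (take i w)) {0..length w}"
      by (auto simp: inj_on_def) (metis length_take min.absorb2)
    show ?thesis by (subst sum.reindex[OF inj]) (auto intro!: sum.cong)
  qed
  finally show ?thesis .
qed

lemma lookup_emb: "Poly_Mapping.lookup (emb f) (W w) = ncpoly f w"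
proof (induction f arbitrary: w)
  case (NVar v) then show ?case by (simp add: Poly_Mapping.single.rep_eq when_def)
next
  case (NConst c) then show ?case by (simp add: Poly_Mapping.single.rep_eq when_def)
next
  case (NAdd f g) then show ?case by (simp add: lookup_add)
next
  case (NMul f g) then show ?case by (simp add: lookup_mult_wrd)
qed

lemma ncpoly_emb_eq: "emb f = emb g \<Longrightarrow> ncpoly f = ncpoly g"
  by (metis lookup_emb ext)

lemma ncpoly_zero_emb: "emb f = 0 \<Longrightarrow> ncpoly f = ncpoly_zero"
  by (rule ext) (metis lookup_emb lookup_zero ncpoly_zero_def)

lemma ncpoly_one_emb: "emb f = 1 \<Longrightarrow> ncpoly f = ncpoly_one"
  apply (rule ext)
  by (metis (mono_tags, lifting) lookup_emb lookup_one ncpoly_one_def when_simps zero_wrd_def wrd.inject)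


definition sb0 :: "cvar \<Rightarrow> ('a::comm_ring_1, nat) ncf" where
  "sb0 = (\<lambda>v. case v of X i \<Rightarrow> NVar i | Y a \<Rightarrow> NConst 0)"
definition sb1 :: "fm \<Rightarrow> cvar \<Rightarrow> ('a::comm_ring_1, nat) ncf" where
  "sb1 T = (\<lambda>v. case v of X i \<Rightarrow> NVar i | Y a \<Rightarrow> ax_poly T a)"
definition okv :: "nat \<Rightarrow> ('a, cvar) ncf \<Rightarrow> bool" where
  "okv n \<Psi> \<longleftrightarrow> (\<forall>v \<in> ncf_vars \<Psi>. case v of X i \<Rightarrow> 1 \<le> i \<and> i \<le> n | Y a \<Rightarrow> valid_ax n a)"

definition IW :: "nat \<Rightarrow> fm \<Rightarrow> (nat wrd \<Rightarrow>\<^sub>0 'a::comm_ring_1) \<Rightarrow> nat \<Rightarrow> bool" where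
  "IW n T r s \<longleftrightarrow> (\<exists>\<Psi> :: ('a, cvar) ncf. okv n \<Psi> \<and> emb (ncsubst sb0 \<Psi>) = 0 \<and>
      emb (ncsubst (sb1 T) \<Psi>) = r \<and> ncf_size \<Psi> \<le> s)"

definition lx :: "('a, nat) ncf \<Rightarrow> ('a, cvar) ncf" where
  "lx A = ncsubst (\<lambda>i. NVar (X i)) A"

lemma ncsubst_ncsubst: "ncsubst s (ncsubst t A) = ncsubst (\<lambda>v. ncsubst s (t v)) A"
  by (induction A) auto

lemma ncsubst_NVar: "ncsubst NVar A = A"
  by (induction A) auto

lemma size_lx[simp]: "ncf_size (lx A) = ncf_size A"
  unfolding lx_def by (induction A) auto

lemma vars_lx[simp]: "ncf_vars (lx A) = X ` ncf_vars A"
  unfolding lx_def by (induction A) auto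

lemma sb0_lx[simp]: "ncsubst sb0 (lx A) = A"
  unfolding lx_def by (simp add: ncsubst_ncsubst sb0_def ncsubst_NVar)

lemma sb1_lx[simp]: "ncsubst (sb1 T) (lx A) = A"
  unfolding lx_def by (simp add: ncsubst_ncsubst sb1_def ncsubst_NVar)

lemma single_W_nil[simp]: "Poly_Mapping.single (W []) c = Poly_Mapping.single 0 c"
  by (simp add: zero_wrd_def)
lemma single0_mult: "Poly_Mapping.single 0 (-1) * p = - (p::(nat wrd \<Rightarrow>\<^sub>0 'a::comm_ring_1))"
  by (simp add: single_uminus)
lemma emb_const_zero[simp]: "emb (NConst 0) = 0" by simp
lemma emb_const_one[simp]: "emb (NConst 1) = 1"
  by simp
lemma emb_const_mone[simp]: "emb (NConst (-1)) = -1"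
  by (simp add: single_uminus)
lemma emb_ncminus1[simp]: "emb (ncminus1 f) = 1 - emb f"
  by (simp add: ncminus1_def single_uminus)

declare emb.simps(1)[simp del] single_uminus[simp]

lemma IW_mono: "IW n T r s \<Longrightarrow> s \<le> s' \<Longrightarrow> IW n T r s'"
  unfolding IW_def by (blast intro: order_trans)

lemma IW_cong: "IW n T r s \<Longrightarrow> r = r' \<Longrightarrow> s \<le> s' \<Longrightarrow> IW n T r' s'"
  using IW_mono by blast

lemma IW_zero: "IW n T 0 1"
  unfolding IW_def by (rule exI[of _ "NConst 0"]) (simp add: okv_def)

lemma IW_zero': "1 \<le> s \<Longrightarrow> IW n T 0 s"
  using IW_zero IW_mono by blast

lemma IW_add: "IW n T r s \<Longrightarrow> IW n T r' s' \<Longrightarrow> IW n T (r + r') (s + s' + 1)"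
  unfolding IW_def
  apply (elim exE conjE)
  subgoal for A B by (rule exI[of _ "NAdd A B"]) (auto simp: okv_def)
  done

lemma IW_neg: "IW n T r s \<Longrightarrow> IW n T (- r) (s + 2)"
  unfolding IW_def
  apply (elim exE conjE)
  subgoal for A by (rule exI[of _ "NMul (NConst (-1)) A"]) (auto simp: okv_def single_uminus)
  done

lemma IW_diff: "IW n T r s \<Longrightarrow> IW n T r' s' \<Longrightarrow> IW n T (r - r') (s + s' + 3)"
proof -
  assume a: "IW n T r s" "IW n T r' s'"
  have "IW n T (r + - r') (s + (s' + 2) + 1)" by (rule IW_add[OF a(1) IW_neg[OF a(2)]])
  then show ?thesis by (rule IW_cong) auto
qed

lemma IW_lmul: "IW n T r s \<Longrightarrow> ncf_vars A \<subseteq> {1..n} \<Longrightarrow> IW n T (emb A * r) (s + ncf_size A + 1)"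
  unfolding IW_def
  apply (elim exE conjE)
  subgoal for B by (rule exI[of _ "NMul (lx A) B"]) (auto simp: okv_def)
  done

lemma IW_rmul: "IW n T r s \<Longrightarrow> ncf_vars A \<subseteq> {1..n} \<Longrightarrow> IW n T (r * emb A) (s + ncf_size A + 1)"
  unfolding IW_def
  apply (elim exE conjE)
  subgoal for B by (rule exI[of _ "NMul B (lx A)"]) (auto simp: okv_def)
  done


abbreviation xv :: "nat \<Rightarrow> (nat wrd \<Rightarrow>\<^sub>0 'a::comm_ring_1)" where
  "xv i \<equiv> emb (NVar i)"

lemma IW_bool: "1 \<le> i \<Longrightarrow> i \<le> n \<Longrightarrow> IW n T (xv i * (1 - xv i)) 1"
  unfolding IW_def
  by (rule exI[of _ "NVar (Y (AxBool i))"]) (simp add: okv_def sb0_def sb1_def)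

lemma IW_comm: "1 \<le> i \<Longrightarrow> i < j \<Longrightarrow> j \<le> n \<Longrightarrow> IW n T (xv i * xv j - xv j * xv i) 1"
  unfolding IW_def
  by (rule exI[of _ "NVar (Y (AxComm i j))"]) (simp add: okv_def sb0_def sb1_def)

lemma lookup_single0: "Poly_Mapping.lookup (Poly_Mapping.single 0 c) (W u) = (if u = [] then c else 0)"
  unfolding Poly_Mapping.single.rep_eq zero_wrd_def when_def by auto

lemma const_comm: "Poly_Mapping.single 0 c * (p :: 'v wrd \<Rightarrow>\<^sub>0 'a) = p * Poly_Mapping.single 0 (c::'a::comm_ring_1)"
proof (rule poly_mapping_eqI)
  fix k :: "'v wrd"
  show "Poly_Mapping.lookup (Poly_Mapping.single 0 c * p) k = Poly_Mapping.lookup (p * Poly_Mapping.single 0 c) k"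
  proof (cases k)
    case (W w)
    have a: "Poly_Mapping.lookup (Poly_Mapping.single 0 c * p) (W w) = c * Poly_Mapping.lookup p (W w)"
    proof -
      have "Poly_Mapping.lookup (Poly_Mapping.single 0 c * p) (W w) =
         (\<Sum>i\<in>{0..length w}. (if take i w = [] then c else 0) * Poly_Mapping.lookup p (W (drop i w)))"
        by (simp only: lookup_mult_wrd lookup_single0)
      also have "\<dots> = (\<Sum>i\<in>{0}. (if take i w = [] then c else 0) * Poly_Mapping.lookup p (W (drop i w)))"
        by (rule sum.mono_neutral_right) auto
      finally show ?thesis by simp
    qed
    have b: "Poly_Mapping.lookup (p * Poly_Mapping.single 0 c) (W w) = Poly_Mapping.lookup p (W w) * c"
    proof -
      have "Poly_Mapping.lookup (p * Poly_Mapping.single 0 c) (W w) =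
         (\<Sum>i\<in>{0..length w}. Poly_Mapping.lookup p (W (take i w)) * (if drop i w = [] then c else 0))"
        by (simp only: lookup_mult_wrd lookup_single0)
      also have "\<dots> = (\<Sum>i\<in>{length w}. Poly_Mapping.lookup p (W (take i w)) * (if drop i w = [] then c else 0))"
        by (rule sum.mono_neutral_right) auto
      finally show ?thesis by simp
    qed
    show ?thesis using a b W by (simp add: mult.commute)
  qed
qed

lemma ar1: "(u1::nat) \<le> 3*x^2 \<Longrightarrow> u2 \<le> 3*y^2 \<Longrightarrow> u1 + u2 + 1 \<le> 3*(1+x+y)^2"
  by (simp add: power2_eq_square algebra_simps)
lemma ar2: "(u1::nat) \<le> 3*x^2 \<Longrightarrow> u2 \<le> 3*y^2 \<Longrightarrow> u1 + y + 1 + (u2 + x + 1) + 1 \<le> 3*(1+x+y)^2"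
  by (simp add: power2_eq_square algebra_simps)
lemma ar3: "1 \<le> (B::nat) \<Longrightarrow> (u1::nat) \<le> 3*x^2*B \<Longrightarrow> u2 \<le> 3*y^2*B \<Longrightarrow> u1 + u2 + 1 \<le> 3*(1+x+y)^2*B"
proof -
  assume "1 \<le> B" "u1 \<le> 3*x^2*B" "u2 \<le> 3*y^2*B"
  moreover have "3*(1+x+y)^2*B = 3*B + 6*x*B + 6*y*B + 3*x^2*B + 3*y^2*B + 6*x*y*B"
    by (simp add: power2_eq_square algebra_simps)
  ultimately show ?thesis by linarith
qed
lemma ar4: "1 \<le> (B::nat) \<Longrightarrow> (u1::nat) \<le> 3*x^2*B \<Longrightarrow> u2 \<le> 3*y^2*B \<Longrightarrow> u2 + x + 1 + (u1 + y + 1) + 1 \<le> 3*(1+x+y)^2*B"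
proof -
  assume "1 \<le> B" "u1 \<le> 3*x^2*B" "u2 \<le> 3*y^2*B"
  moreover have "3*(1+x+y)^2*B = 3*B + 6*x*B + 6*y*B + 3*x^2*B + 3*y^2*B + 6*x*y*B"
    by (simp add: power2_eq_square algebra_simps)
  moreover have "x \<le> x * B" "y \<le> y * B" using \<open>1 \<le> B\<close> by auto
  ultimately show ?thesis by linarith
qed

lemma K1: "i \<in> {1..n} \<Longrightarrow> ncf_vars b \<subseteq> {1..n} \<Longrightarrow>
   IW n T (xv i * emb b - emb b * xv i) (3 * ncf_size b ^ 2)"
proof (induction b)
  case (NVar j)
  consider "i = j" | "i < j" | "j < i" by linarith
  then show ?case
  proof cases
    case 1 then show ?thesis using IW_zero'[of 3] by simp
  next
    case 2 then show ?thesis using NVar IW_comm[of i j n T] by (auto elim: IW_mono)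
  next
    case 3 then show ?thesis using NVar IW_neg[OF IW_comm[of j i n T]] by (auto elim!: IW_mono)
  qed
next
  case (NConst c) then show ?case using IW_zero'[of 3] by (simp add: const_comm)
next
  case (NAdd b1 b2)
  then have h1: "IW n T (xv i * emb b1 - emb b1 * xv i) (3 * ncf_size b1 ^ 2)"
    and h2: "IW n T (xv i * emb b2 - emb b2 * xv i) (3 * ncf_size b2 ^ 2)" by auto
  have e: "(xv i * emb b1 - emb b1 * xv i) + (xv i * emb b2 - emb b2 * xv i) = xv i * emb (NAdd b1 b2) - emb (NAdd b1 b2) * xv i"
    by (simp add: algebra_simps)
  show ?case
    by (rule IW_cong[OF IW_add[OF h1 h2] e]) (simp only: ncf_size.simps, rule ar1[OF order_refl order_refl])
next
  case (NMul b1 b2)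
  then have h1: "IW n T (xv i * emb b1 - emb b1 * xv i) (3 * ncf_size b1 ^ 2)"
    and h2: "IW n T (xv i * emb b2 - emb b2 * xv i) (3 * ncf_size b2 ^ 2)" by auto
  have v: "ncf_vars b1 \<subseteq> {1..n}" "ncf_vars b2 \<subseteq> {1..n}" using NMul by auto
  have e: "(xv i * emb b1 - emb b1 * xv i) * emb b2 + emb b1 * (xv i * emb b2 - emb b2 * xv i) = xv i * emb (NMul b1 b2) - emb (NMul b1 b2) * xv i"
    by (simp add: algebra_simps)
  show ?case
    by (rule IW_cong[OF IW_add[OF IW_rmul[OF h1 v(2)] IW_lmul[OF h2 v(1)]] e]) (simp only: ncf_size.simps, rule ar2[OF order_refl order_refl])
qed

lemma ncf_size_pos: "1 \<le> ncf_size f"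
  by (cases f) auto

lemma K2: "ncf_vars a \<subseteq> {1..n} \<Longrightarrow> ncf_vars b \<subseteq> {1..n} \<Longrightarrow>
   IW n T (emb a * emb b - emb b * emb a) (3 * ncf_size a ^ 2 * (3 * ncf_size b ^ 2))"
proof (induction a)
  case (NVar i)
  have "3 * ncf_size b ^ 2 \<le> 3 * ncf_size (NVar i) ^ 2 * (3 * ncf_size b ^ 2)" by simp
  then show ?case using K1[of i n b T] NVar by (auto elim: IW_mono)
next
  case (NConst c)
  have "1 \<le> 3 * ncf_size (NConst c) ^ 2 * (3 * ncf_size b ^ 2)" using ncf_size_pos[of b] by (simp add: power2_eq_square)
  from IW_zero'[OF this] show ?case by (simp add: const_comm)
next
  case (NAdd a1 a2)
  then have h1: "IW n T (emb a1 * emb b - emb b * emb a1) (3 * ncf_size a1 ^ 2 * (3 * ncf_size b ^ 2))"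
    and h2: "IW n T (emb a2 * emb b - emb b * emb a2) (3 * ncf_size a2 ^ 2 * (3 * ncf_size b ^ 2))" by auto
  have B: "1 \<le> 3 * ncf_size b ^ 2" using ncf_size_pos[of b] by (simp add: power2_eq_square)
  have e: "(emb a1 * emb b - emb b * emb a1) + (emb a2 * emb b - emb b * emb a2) = emb (NAdd a1 a2) * emb b - emb b * emb (NAdd a1 a2)"
    by (simp add: algebra_simps)
  show ?case
    by (rule IW_cong[OF IW_add[OF h1 h2] e]) (simp only: ncf_size.simps, rule ar3[OF B order_refl order_refl])
next
  case (NMul a1 a2)
  then have h1: "IW n T (emb a1 * emb b - emb b * emb a1) (3 * ncf_size a1 ^ 2 * (3 * ncf_size b ^ 2))"
    and h2: "IW n T (emb a2 * emb b - emb b * emb a2) (3 * ncf_size a2 ^ 2 * (3 * ncf_size b ^ 2))" by auto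
  have v: "ncf_vars a1 \<subseteq> {1..n}" "ncf_vars a2 \<subseteq> {1..n}" using NMul by auto
  have B: "1 \<le> 3 * ncf_size b ^ 2" using ncf_size_pos[of b] by (simp add: power2_eq_square)
  have e: "emb a1 * (emb a2 * emb b - emb b * emb a2) + (emb a1 * emb b - emb b * emb a1) * emb a2 = emb (NMul a1 a2) * emb b - emb b * emb (NMul a1 a2)"
    by (simp add: algebra_simps)
  show ?case
    by (rule IW_cong[OF IW_add[OF IW_lmul[OF h2 v(1)] IW_rmul[OF h1 v(2)]] e]) (simp only: ncf_size.simps, rule ar4[OF B order_refl order_refl])
qed


lemma vars_ncminus1[simp]: "ncf_vars (ncminus1 f) = ncf_vars f"
  by (simp add: ncminus1_def)
lemma size_ncminus1[simp]: "ncf_size (ncminus1 f) = ncf_size f + 4"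
  by (simp add: ncminus1_def)

lemma vars_tr[simp]: "ncf_vars (tr A) = atoms A"
  by (induction A) auto

lemma size_tr: "ncf_size (tr A) \<le> 13 * fsize A"
  by (induction A) auto

lemma ar5: "x \<le> N \<Longrightarrow> y \<le> (N::nat) \<Longrightarrow> 1 \<le> N \<Longrightarrow> 3*x^2*(3*y^2) + 3*x + 2*y + 7 \<le> 21*N^4"
proof -
  assume a: "x \<le> N" "y \<le> N" "1 \<le> N"
  have x2: "x^2 \<le> N^2" and y2: "y^2 \<le> N^2" using a by (simp_all add: power_mono)
  have "x^2*y^2 \<le> N^2*N^2" by (rule mult_le_mono[OF x2 y2])
  moreover have "N^2*N^2 = N^4" by (simp flip: power_add)
  ultimately have 1: "x^2*y^2 \<le> N^4" by simp
  have "N \<le> N^4" using a by (simp add: power_increasing[of 1 4 N, simplified])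
  then have 2: "x \<le> N^4" "y \<le> N^4" using a by linarith+
  have 3: "1 \<le> N^4" using a by simp
  show ?thesis using 1 2 3 by linarith
qed

lemma bool_step:
  fixes U V :: "('a::comm_ring_1, nat) ncf"
  assumes "IW n T (emb U * (1 - emb U)) s1" "IW n T (emb V * (1 - emb V)) s2"
    "IW n T (emb U * emb V - emb V * emb U) sc"
    "ncf_vars U \<subseteq> {1..n}" "ncf_vars V \<subseteq> {1..n}"
  shows "IW n T (emb U * emb V * (1 - emb U * emb V)) (s1 + s2 + sc + 3 * ncf_size U + 2 * ncf_size V + 7)"
proof -
  have UU: "ncf_vars (NMul U U) \<subseteq> {1..n}" using assms by simp
  have "IW n T ((emb U * (1 - emb U)) * emb V + ((emb U * (emb U * emb V - emb V * emb U)) * emb V)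
          + emb (NMul U U) * (emb V * (1 - emb V)))
        ((s1 + ncf_size V + 1) + ((sc + ncf_size U + 1) + ncf_size V + 1) + 1 + (s2 + ncf_size (NMul U U) + 1) + 1)"
    by (intro IW_add IW_rmul IW_lmul assms UU)
  then show ?thesis
    by (rule IW_cong) (simp_all add: algebra_simps)
qed

lemma Bool:
  assumes "atoms A \<subseteq> {1..n}" "ncf_size (tr A :: ('a::comm_ring_1, nat) ncf) \<le> N"
  shows "IW n T (emb (tr A :: ('a, nat) ncf) * (1 - emb (tr A :: ('a, nat) ncf))) (fsize A * (21 * N^4))"
  using assms
proof (induction A)
  case (FVar i)
  then have "1 \<le> N" by simp
  then have "1 \<le> fsize (FVar i) * (21 * N^4)" by simp
  with FVar show ?case using IW_bool[of i n T] by (auto elim!: IW_mono simp: emb.simps)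
next
  case FTrue
  have "1 \<le> N" using FTrue by simp
  then have "1 \<le> fsize FTrue * (21 * N^4)" by simp
  from IW_zero'[OF this] show ?case by simp
next
  case FFalse
  have "1 \<le> N" using FFalse by simp
  then have "1 \<le> fsize FFalse * (21 * N^4)" by simp
  from IW_zero'[OF this] show ?case by simp
next
  case (FNot A)
  then have h: "IW n T (emb (tr A :: ('a, nat) ncf) * (1 - emb (tr A :: ('a, nat) ncf))) (fsize A * (21 * N^4))"
    by simp
  show ?case by (rule IW_cong[OF h]) (simp_all add: algebra_simps)
next
  case (FOr A B)
  let ?a = "tr A :: ('a, nat) ncf" and ?b = "tr B :: ('a, nat) ncf"
  have sa: "ncf_size ?a \<le> N" and sb: "ncf_size ?b \<le> N" using FOr.prems by auto
  have N1: "1 \<le> N" using sa ncf_size_pos[of ?a] by linarith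
  have hA: "IW n T (emb ?a * (1 - emb ?a)) (fsize A * (21 * N^4))" using FOr by simp
  have hB: "IW n T (emb ?b * (1 - emb ?b)) (fsize B * (21 * N^4))" using FOr by simp
  have hC: "IW n T (emb ?a * emb ?b - emb ?b * emb ?a) (3 * ncf_size ?a ^ 2 * (3 * ncf_size ?b ^ 2))"
    by (rule K2) (use FOr.prems in auto)
  have st: "IW n T (emb ?a * emb ?b * (1 - emb ?a * emb ?b)) (fsize A * (21 * N^4) + fsize B * (21 * N^4) + 3 * ncf_size ?a ^ 2 * (3 * ncf_size ?b ^ 2) + 3 * ncf_size ?a + 2 * ncf_size ?b + 7)"
    by (rule bool_step[OF hA hB hC]) (use FOr.prems in auto)
  have "3 * ncf_size ?a ^ 2 * (3 * ncf_size ?b ^ 2) + 3 * ncf_size ?a + 2 * ncf_size ?b + 7 \<le> 21 * N^4"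
    by (rule ar5[OF sa sb N1])
  then show ?case by (intro IW_cong[OF st]) (simp_all add: algebra_simps)
next
  case (FAnd A B)
  let ?a = "tr A :: ('a, nat) ncf" and ?b = "tr B :: ('a, nat) ncf"
  let ?u = "ncminus1 ?a" and ?v = "ncminus1 ?b"
  have sa: "ncf_size ?u \<le> N" and sb: "ncf_size ?v \<le> N" using FAnd.prems by auto
  have N1: "1 \<le> N" using sa ncf_size_pos[of ?u] by linarith
  have hA: "IW n T (emb ?u * (1 - emb ?u)) (fsize A * (21 * N^4))" using FAnd
    by (auto elim!: IW_cong simp: algebra_simps)
  have hB: "IW n T (emb ?v * (1 - emb ?v)) (fsize B * (21 * N^4))" using FAnd
    by (auto elim!: IW_cong simp: algebra_simps)
  have hC: "IW n T (emb ?u * emb ?v - emb ?v * emb ?u) (3 * ncf_size ?u ^ 2 * (3 * ncf_size ?v ^ 2))"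
    by (rule K2) (use FAnd.prems in auto)
  have st: "IW n T (emb ?u * emb ?v * (1 - emb ?u * emb ?v)) (fsize A * (21 * N^4) + fsize B * (21 * N^4) + 3 * ncf_size ?u ^ 2 * (3 * ncf_size ?v ^ 2) + 3 * ncf_size ?u + 2 * ncf_size ?v + 7)"
    by (rule bool_step[OF hA hB hC]) (use FAnd.prems in auto)
  have "3 * ncf_size ?u ^ 2 * (3 * ncf_size ?v ^ 2) + 3 * ncf_size ?u + 2 * ncf_size ?v + 7 \<le> 21 * N^4"
    by (rule ar5[OF sa sb N1])
  then show ?case by (intro IW_cong[OF st]) (simp_all add: algebra_simps)
qed


lemma fsize_le_tr: "fsize A \<le> ncf_size (tr A)"
  by (induction A) auto

lemma atoms_fsubst: "atoms (fsubst \<sigma> A) = (\<Union>w\<in>atoms A. atoms (\<sigma> w))"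
  by (induction A) auto

lemma fsubst_fsubst: "fsubst \<sigma> (fsubst \<tau> A) = fsubst (\<lambda>i. fsubst \<sigma> (\<tau> i)) A"
  by (induction A) auto

lemma feval_fsubst: "feval a (fsubst \<tau> A) = feval (\<lambda>i. feval a (\<tau> i)) A"
  by (induction A) auto

lemma size_tr_subst:
  assumes "\<And>w. ncf_size (tr (\<sigma> w) :: ('a::comm_ring_1, nat) ncf) \<le> m" "1 \<le> m"
  shows "ncf_size (tr (fsubst \<sigma> G) :: ('a, nat) ncf) \<le> 13 * fsize G * m"
  using assms
proof (induction G)
  case (FVar x) 
  have "m \<le> 13 * fsize (FVar x) * m" by simp
  then show ?case using FVar(1)[of x] by simp
qed (auto simp: algebra_simps)

lemma ar6: "(M::nat) \<ge> 1 \<Longrightarrow> x \<le> M \<Longrightarrow> y \<le> M \<Longrightarrow> z \<le> M \<Longrightarrow> w \<le> M \<Longrightarrow> c \<le> 3 * x^2 * (3 * y^2) \<Longrightarrow>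
   u1 + z + 1 + (c + z + 1) + 1 + (u2 + y + 1) + 1 + (c + w + 1) + 3 \<le> u1 + u2 + 40 * M^4"
proof -
  assume a: "M \<ge> 1" "x \<le> M" "y \<le> M" "z \<le> M" "w \<le> M" "c \<le> 3 * x^2 * (3 * y^2)"
  have x2: "x^2 \<le> M^2" and y2: "y^2 \<le> M^2" using a by (simp_all add: power_mono)
  have "x^2*y^2 \<le> M^2*M^2" by (rule mult_le_mono[OF x2 y2])
  moreover have "M^2*M^2 = M^4" by (simp flip: power_add)
  ultimately have 1: "x^2*y^2 \<le> M^4" by simp
  have "M \<le> M^4" using a by (simp add: power_increasing[of 1 4 M, simplified])
  moreover have "3 * x^2 * (3 * y^2) = 9 * (x^2*y^2)" by simp
  ultimately show ?thesis using 1 a by linarith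
qed

lemma shannon_or:
  fixes Zf a a' b b' :: "('a::comm_ring_1, nat) ncf"
  assumes h1: "IW n T (emb Zf * emb a - emb Zf * emb a') s1"
      and h2: "IW n T (emb Zf * emb b - emb Zf * emb b') s2"
      and v: "ncf_vars Zf \<subseteq> {1..n}" "ncf_vars a \<subseteq> {1..n}" "ncf_vars a' \<subseteq> {1..n}"
             "ncf_vars b \<subseteq> {1..n}" "ncf_vars b' \<subseteq> {1..n}"
      and sz: "ncf_size Zf \<le> M" "ncf_size a' \<le> M" "ncf_size b \<le> M" "ncf_size b' \<le> M" "1 \<le> M"
  shows "IW n T (emb Zf * (emb a * emb b) - emb Zf * (emb a' * emb b')) (s1 + s2 + 40 * M^4)"
proof -
  let ?Z = "emb Zf"
  have C: "IW n T (?Z * emb a' - emb a' * ?Z) (3 * ncf_size Zf ^ 2 * (3 * ncf_size a' ^ 2))"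
    by (rule K2[OF v(1) v(3)])
  have w: "IW n T ((?Z * emb a - ?Z * emb a') * emb b + (?Z * emb a' - emb a' * ?Z) * emb b + emb a' * (?Z * emb b - ?Z * emb b')
      - (?Z * emb a' - emb a' * ?Z) * emb b')
      ((s1 + ncf_size b + 1) + (3 * ncf_size Zf ^ 2 * (3 * ncf_size a' ^ 2) + ncf_size b + 1) + 1 + (s2 + ncf_size a' + 1) + 1
       + (3 * ncf_size Zf ^ 2 * (3 * ncf_size a' ^ 2) + ncf_size b' + 1) + 3)"
    by (intro IW_diff IW_add IW_rmul IW_lmul h1 h2 C v)
  show ?thesis
  proof (rule IW_cong[OF w])
    show "(?Z * emb a - ?Z * emb a') * emb b + (?Z * emb a' - emb a' * ?Z) * emb b + emb a' * (?Z * emb b - ?Z * emb b')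
      - (?Z * emb a' - emb a' * ?Z) * emb b' = ?Z * (emb a * emb b) - ?Z * (emb a' * emb b')"
      by (simp add: algebra_simps)
    show "s1 + ncf_size b + 1 + (3 * (ncf_size Zf)\<^sup>2 * (3 * (ncf_size a')\<^sup>2) + ncf_size b + 1) + 1 + (s2 + ncf_size a' + 1) + 1 +
    (3 * (ncf_size Zf)\<^sup>2 * (3 * (ncf_size a')\<^sup>2) + ncf_size b' + 1) + 3 \<le> s1 + s2 + 40 * M ^ 4"
      by (rule ar6[OF sz(5) sz(1) sz(2) sz(3) sz(4) order_refl])
  qed
qed


lemma ar7: "1 \<le> (M::nat) \<Longrightarrow> 40 * M^4 + 6 \<le> 50 * M^5"
proof -
  assume a: "1 \<le> M"
  have "M^4 \<le> M^5" using a by (simp add: power_increasing)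
  moreover have "1 \<le> M^4" using a by simp
  ultimately show ?thesis by linarith
qed

lemma shannon_gen:
  fixes Zf :: "('a::comm_ring_1, nat) ncf"
  assumes rho: "\<And>w. w \<noteq> v \<Longrightarrow> \<rho> w = \<sigma> w"
    and at: "\<And>w. atoms (\<sigma> w) \<subseteq> {1..n}" "\<And>w. atoms (\<rho> w) \<subseteq> {1..n}"
    and zv: "ncf_vars Zf \<subseteq> {1..n}" "ncf_size Zf \<le> M" "1 \<le> M"
    and base: "IW n T (emb Zf * emb (tr (\<sigma> v) :: ('a, nat) ncf) - emb Zf * emb (tr (\<rho> v) :: ('a, nat) ncf)) (50 * M^5)"
  shows "ncf_size (tr (fsubst \<sigma> G) :: ('a, nat) ncf) \<le> M \<Longrightarrow> ncf_size (tr (fsubst \<rho> G) :: ('a, nat) ncf) \<le> M \<Longrightarrow>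
    IW n T (emb Zf * emb (tr (fsubst \<sigma> G) :: ('a, nat) ncf) - emb Zf * emb (tr (fsubst \<rho> G) :: ('a, nat) ncf)) (fsize G * (50 * M^5))"
proof (induction G)
  case (FVar w)
  show ?case
  proof (cases "w = v")
    case True then show ?thesis using base by simp
  next
    case False
    have "1 \<le> fsize (FVar w) * (50 * M^5)" using zv by simp
    from IW_zero'[OF this] show ?thesis using False rho by simp
  qed
next
  case FTrue
  have "1 \<le> fsize FTrue * (50 * M^5)" using zv by simp
  from IW_zero'[OF this] show ?case by simp
next
  case FFalse
  have "1 \<le> fsize FFalse * (50 * M^5)" using zv by simp
  from IW_zero'[OF this] show ?case by simp
next
  case (FNot A)
  then have h: "IW n T (emb Zf * emb (tr (fsubst \<sigma> A) :: ('a, nat) ncf) - emb Zf * emb (tr (fsubst \<rho> A) :: ('a, nat) ncf)) (fsize A * (50 * M^5))"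
    by simp
  have "2 \<le> 50 * M^5" using zv by simp
  then have le: "fsize A * (50 * M^5) + 2 \<le> fsize (FNot A) * (50 * M^5)" by (simp add: algebra_simps)
  show ?case by (rule IW_cong[OF IW_neg[OF h] _ le]) (simp add: algebra_simps)
next
  case (FOr A B)
  let ?a = "tr (fsubst \<sigma> A) :: ('a, nat) ncf" and ?a' = "tr (fsubst \<rho> A) :: ('a, nat) ncf"
  let ?b = "tr (fsubst \<sigma> B) :: ('a, nat) ncf" and ?b' = "tr (fsubst \<rho> B) :: ('a, nat) ncf"
  have hA: "IW n T (emb Zf * emb ?a - emb Zf * emb ?a') (fsize A * (50 * M^5))" using FOr by simp
  have hB: "IW n T (emb Zf * emb ?b - emb Zf * emb ?b') (fsize B * (50 * M^5))" using FOr by simp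
  have v: "ncf_vars ?a \<subseteq> {1..n}" "ncf_vars ?a' \<subseteq> {1..n}" "ncf_vars ?b \<subseteq> {1..n}" "ncf_vars ?b' \<subseteq> {1..n}"
    using at by (auto simp: atoms_fsubst)
  have s: "ncf_size ?a' \<le> M" "ncf_size ?b \<le> M" "ncf_size ?b' \<le> M" using FOr.prems by auto
  have st: "IW n T (emb Zf * (emb ?a * emb ?b) - emb Zf * (emb ?a' * emb ?b')) (fsize A * (50 * M^5) + fsize B * (50 * M^5) + 40 * M^4)"
    by (rule shannon_or[OF hA hB zv(1) v zv(2) s zv(3)])
  have "40 * M^4 \<le> 50 * M^5" using ar7[OF zv(3)] by linarith
  then show ?case by (intro IW_cong[OF st]) (simp_all add: algebra_simps)
next
  case (FAnd A B)
  let ?a = "ncminus1 (tr (fsubst \<sigma> A)) :: ('a, nat) ncf" and ?a' = "ncminus1 (tr (fsubst \<rho> A)) :: ('a, nat) ncf"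
  let ?b = "ncminus1 (tr (fsubst \<sigma> B)) :: ('a, nat) ncf" and ?b' = "ncminus1 (tr (fsubst \<rho> B)) :: ('a, nat) ncf"
  have hA0: "IW n T (emb Zf * emb (tr (fsubst \<sigma> A) :: ('a, nat) ncf) - emb Zf * emb (tr (fsubst \<rho> A) :: ('a, nat) ncf)) (fsize A * (50 * M^5))"
    using FAnd by simp
  have hB0: "IW n T (emb Zf * emb (tr (fsubst \<sigma> B) :: ('a, nat) ncf) - emb Zf * emb (tr (fsubst \<rho> B) :: ('a, nat) ncf)) (fsize B * (50 * M^5))"
    using FAnd by simp
  have hA: "IW n T (emb Zf * emb ?a - emb Zf * emb ?a') (fsize A * (50 * M^5) + 2)"
    by (rule IW_cong[OF IW_neg[OF hA0]]) (simp_all add: algebra_simps)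
  have hB: "IW n T (emb Zf * emb ?b - emb Zf * emb ?b') (fsize B * (50 * M^5) + 2)"
    by (rule IW_cong[OF IW_neg[OF hB0]]) (simp_all add: algebra_simps)
  have v: "ncf_vars ?a \<subseteq> {1..n}" "ncf_vars ?a' \<subseteq> {1..n}" "ncf_vars ?b \<subseteq> {1..n}" "ncf_vars ?b' \<subseteq> {1..n}"
    using at by (auto simp: atoms_fsubst)
  have s: "ncf_size ?a' \<le> M" "ncf_size ?b \<le> M" "ncf_size ?b' \<le> M" using FAnd.prems by auto
  have st: "IW n T (emb Zf * (emb ?a * emb ?b) - emb Zf * (emb ?a' * emb ?b')) (fsize A * (50 * M^5) + 2 + (fsize B * (50 * M^5) + 2) + 40 * M^4)"
    by (rule shannon_or[OF hA hB zv(1) v zv(2) s zv(3)])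
  have "40 * M^4 + 6 \<le> 50 * M^5" using ar7[OF zv(3)] by linarith
  then show ?case by (intro IW_cong[OF IW_neg[OF st]]) (simp_all add: algebra_simps)
qed


lemma finite_atoms: "finite (atoms G)"
  by (induction G) auto

lemma fsubst_cong: "(\<And>w. w \<in> atoms G \<Longrightarrow> \<sigma> w = \<tau> w) \<Longrightarrow> fsubst \<sigma> G = fsubst \<tau> G"
  by (induction G) auto

lemma fsubst_closed: "atoms G = {} \<Longrightarrow> fsubst \<sigma> G = G"
  by (induction G) auto

lemma closed_tr: "atoms G = {} \<Longrightarrow> emb (tr G :: ('a::comm_ring_1, nat) ncf) = (if feval a G then 0 else 1)"
  by (induction G) (auto simp: algebra_simps)

lemma ar8:
  assumes "1 \<le> m" "1 \<le> (f::nat)" "M = 13 * f * m + 4" "S1 \<le> f * (50 * M^5)" "S2 \<le> f * (50 * M^5)"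
     "u \<le> m + 4" "z \<le> m"
  shows "S1 + (K1 * m^5 + u + 1) + 1 + (S2 + (K0 * m^5 + z + 1) + 1) + 1 \<le> (100 * 17^5 * f^6 + K1 + K0 + 11) * m^5"
proof -
  have "M \<le> 17 * f * m" using assms by (simp add: algebra_simps)
  then have "M^5 \<le> (17 * f * m)^5" by (rule power_mono) simp
  also have "\<dots> = 17^5 * f^5 * m^5" by (simp add: power_mult_distrib)
  finally have M5: "M^5 \<le> 17^5 * f^5 * m^5" .
  then have "f * (50 * M^5) \<le> f * (50 * (17^5 * f^5 * m^5))" by simp
  also have "\<dots> = 50 * 17^5 * f^6 * m^5" by (simp add: power_Suc[symmetric] del: power_Suc)
  finally have A: "f * (50 * M^5) \<le> 50 * 17^5 * f^6 * m^5" .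
  have "m \<le> m^5" using assms(1) by (simp add: power_increasing[of 1 5 m, simplified])
  moreover have "1 \<le> m^5" using assms(1) by simp
  ultimately have B: "u + z + 5 \<le> 11 * m^5" using assms by linarith
  have "(100 * 17^5 * f^6 + K1 + K0 + 11) * m^5 = 2 * (50 * 17^5 * f^6 * m^5) + K1 * m^5 + K0 * m^5 + 11 * m^5"
    by (simp add: algebra_simps)
  then show ?thesis using A B assms by linarith
qed

lemma taut_inst:
  assumes "tautology G"
  shows "\<exists>K. \<forall>n T (\<sigma>::nat \<Rightarrow> fm) m. (\<forall>w. atoms (\<sigma> w) \<subseteq> {1..n}) \<longrightarrow>
     (\<forall>w. ncf_size (tr (\<sigma> w) :: ('a::comm_ring_1, nat) ncf) \<le> m) \<longrightarrow> 1 \<le> m \<longrightarrow>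
     IW n T (emb (tr (fsubst \<sigma> G) :: ('a, nat) ncf)) (K * m^5)"
  using assms
proof (induction "card (atoms G)" arbitrary: G rule: less_induct)
  case less
  show ?case
  proof (cases "atoms G = {}")
    case True
    show ?thesis
    proof (intro exI allI impI)
      fix n T and \<sigma> :: "nat \<Rightarrow> fm" and m :: nat
      assume "1 \<le> m"
      then have "1 \<le> 1 * m^5" by simp
      moreover have "fsubst \<sigma> G = G" using True by (rule fsubst_closed)
      moreover have "emb (tr G :: ('a, nat) ncf) = 0"
        using closed_tr[OF True, of "\<lambda>_. True"] less.prems by (simp add: tautology_def)
      ultimately show "IW n T (emb (tr (fsubst \<sigma> G) :: ('a, nat) ncf)) (1 * m^5)"
        using IW_zero' by metis
    qed
  next
    case False
    then obtain v where v: "v \<in> atoms G" by blast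
    define G1 where "G1 = fsubst (FVar(v := FTrue)) G"
    define G0 where "G0 = fsubst (FVar(v := FFalse)) G"
    have at1: "atoms G1 \<subseteq> atoms G - {v}" unfolding G1_def by (auto simp: atoms_fsubst split: if_splits)
    have at0: "atoms G0 \<subseteq> atoms G - {v}" unfolding G0_def by (auto simp: atoms_fsubst split: if_splits)
    have c1: "card (atoms G1) < card (atoms G)"
      by (rule le_less_trans[OF card_mono[OF _ at1] card_Diff1_less[OF finite_atoms v]]) (simp add: finite_atoms)
    have c0: "card (atoms G0) < card (atoms G)"
      by (rule le_less_trans[OF card_mono[OF _ at0] card_Diff1_less[OF finite_atoms v]]) (simp add: finite_atoms)
    have t1: "tautology G1" using less.prems unfolding G1_def tautology_def by (simp add: feval_fsubst)
    have t0: "tautology G0" using less.prems unfolding G0_def tautology_def by (simp add: feval_fsubst)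
    obtain K1 where K1: "\<forall>n T (\<sigma>::nat \<Rightarrow> fm) m. (\<forall>w. atoms (\<sigma> w) \<subseteq> {1..n}) \<longrightarrow>
     (\<forall>w. ncf_size (tr (\<sigma> w) :: ('a, nat) ncf) \<le> m) \<longrightarrow> 1 \<le> m \<longrightarrow>
     IW n T (emb (tr (fsubst \<sigma> G1) :: ('a, nat) ncf)) (K1 * m^5)"
      using less.hyps[OF c1 t1] by blast
    obtain K0 where K0: "\<forall>n T (\<sigma>::nat \<Rightarrow> fm) m. (\<forall>w. atoms (\<sigma> w) \<subseteq> {1..n}) \<longrightarrow>
     (\<forall>w. ncf_size (tr (\<sigma> w) :: ('a, nat) ncf) \<le> m) \<longrightarrow> 1 \<le> m \<longrightarrow>
     IW n T (emb (tr (fsubst \<sigma> G0) :: ('a, nat) ncf)) (K0 * m^5)"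
      using less.hyps[OF c0 t0] by blast
    show ?thesis
    proof (intro exI[of _ "100 * 17^5 * fsize G^6 + K1 + K0 + 11"] allI impI)
      fix n T and \<sigma> :: "nat \<Rightarrow> fm" and m :: nat
      assume at: "\<forall>w. atoms (\<sigma> w) \<subseteq> {1..n}" and sz: "\<forall>w. ncf_size (tr (\<sigma> w) :: ('a, nat) ncf) \<le> m" and m1: "1 \<le> m"
      define \<sigma>T where "\<sigma>T = \<sigma>(v := FTrue)"
      define \<sigma>F where "\<sigma>F = \<sigma>(v := FFalse)"
      have atT: "\<forall>w. atoms (\<sigma>T w) \<subseteq> {1..n}" and atF: "\<forall>w. atoms (\<sigma>F w) \<subseteq> {1..n}"
        using at by (auto simp: \<sigma>T_def \<sigma>F_def)
      have szT: "\<forall>w. ncf_size (tr (\<sigma>T w) :: ('a, nat) ncf) \<le> m" and szF: "\<forall>w. ncf_size (tr (\<sigma>F w) :: ('a, nat) ncf) \<le> m"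
        using sz m1 by (auto simp: \<sigma>T_def \<sigma>F_def)
      have eT: "fsubst \<sigma>T G = fsubst \<sigma> G1"
        unfolding G1_def fsubst_fsubst \<sigma>T_def by (rule fsubst_cong) auto
      have eF: "fsubst \<sigma>F G = fsubst \<sigma> G0"
        unfolding G0_def fsubst_fsubst \<sigma>F_def by (rule fsubst_cong) auto
      have IT: "IW n T (emb (tr (fsubst \<sigma>T G) :: ('a, nat) ncf)) (K1 * m^5)"
      proof -
        have "IW n T (emb (tr (fsubst \<sigma> G1) :: ('a, nat) ncf)) (K1 * m^5)" using K1 at sz m1 by blast
        then show ?thesis by (simp add: eT)
      qed
      have IF: "IW n T (emb (tr (fsubst \<sigma>F G) :: ('a, nat) ncf)) (K0 * m^5)"
      proof -
        have "IW n T (emb (tr (fsubst \<sigma> G0) :: ('a, nat) ncf)) (K0 * m^5)" using K0 at sz m1 by blast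
        then show ?thesis by (simp add: eF)
      qed
      define M where "M = 13 * fsize G * m + 4"
      have f1: "1 \<le> fsize G" by (cases G) auto
      have M1: "1 \<le> M" unfolding M_def by simp
      have sG: "ncf_size (tr (fsubst \<sigma> G) :: ('a, nat) ncf) \<le> M"
      proof -
        have "ncf_size (tr (fsubst \<sigma> G) :: ('a, nat) ncf) \<le> 13 * fsize G * m" by (rule size_tr_subst) (use sz m1 in auto)
        then show ?thesis unfolding M_def by simp
      qed
      have sGT: "ncf_size (tr (fsubst \<sigma>T G) :: ('a, nat) ncf) \<le> M"
      proof -
        have "ncf_size (tr (fsubst \<sigma>T G) :: ('a, nat) ncf) \<le> 13 * fsize G * m" by (rule size_tr_subst) (use szT m1 in auto)
        then show ?thesis unfolding M_def by simp
      qed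
      have sGF: "ncf_size (tr (fsubst \<sigma>F G) :: ('a, nat) ncf) \<le> M"
      proof -
        have "ncf_size (tr (fsubst \<sigma>F G) :: ('a, nat) ncf) \<le> 13 * fsize G * m" by (rule size_tr_subst) (use szF m1 in auto)
        then show ?thesis unfolding M_def by simp
      qed
      let ?z = "tr (\<sigma> v) :: ('a, nat) ncf"
      have zm: "ncf_size ?z \<le> m" using sz by simp
      have "1 * m \<le> (13 * fsize G) * m" by (rule mult_le_mono1) (use f1 in simp)
      then have "m \<le> 13 * fsize G * m" by simp
      then have zM: "ncf_size ?z + 4 \<le> M" using zm unfolding M_def by linarith
      have zv: "ncf_vars ?z \<subseteq> {1..n}" using at by simp
      have "fsize (\<sigma> v) \<le> ncf_size ?z" by (rule fsize_le_tr)
      then have fz: "fsize (\<sigma> v) \<le> M" using zM by linarith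
      have Bz: "IW n T (emb ?z * (1 - emb ?z)) (fsize (\<sigma> v) * (21 * M^4))"
        by (rule Bool) (use at zM in auto)
      have "fsize (\<sigma> v) * (21 * M^4) \<le> M * (21 * M^4)" using fz by simp
      also have "\<dots> = 21 * M^5" by (simp add: power_Suc[symmetric] del: power_Suc)
      finally have b21: "fsize (\<sigma> v) * (21 * M^4) \<le> 21 * M^5" .
      have baseU: "IW n T (emb (ncminus1 ?z) * emb (tr (\<sigma> v) :: ('a, nat) ncf) - emb (ncminus1 ?z) * emb (tr (\<sigma>T v) :: ('a, nat) ncf)) (50 * M^5)"
        by (rule IW_cong[OF Bz]) (use b21 in \<open>simp_all add: \<sigma>T_def algebra_simps\<close>)
      have baseZ: "IW n T (emb ?z * emb (tr (\<sigma> v) :: ('a, nat) ncf) - emb ?z * emb (tr (\<sigma>F v) :: ('a, nat) ncf)) (50 * M^5)"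
      proof (rule IW_cong[OF IW_neg[OF Bz]])
        have "1 \<le> M^5" using M1 by simp
        then show "fsize (\<sigma> v) * (21 * M^4) + 2 \<le> 50 * M^5" using b21 by linarith
      qed (simp add: \<sigma>F_def algebra_simps)
      have SU: "IW n T (emb (ncminus1 ?z) * emb (tr (fsubst \<sigma> G) :: ('a, nat) ncf) - emb (ncminus1 ?z) * emb (tr (fsubst \<sigma>T G) :: ('a, nat) ncf)) (fsize G * (50 * M^5))"
        by (rule shannon_gen[OF _ _ _ _ _ M1 baseU sG sGT]) (use at atT zv zM in \<open>auto simp: \<sigma>T_def\<close>)
      have SZ: "IW n T (emb ?z * emb (tr (fsubst \<sigma> G) :: ('a, nat) ncf) - emb ?z * emb (tr (fsubst \<sigma>F G) :: ('a, nat) ncf)) (fsize G * (50 * M^5))"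
        by (rule shannon_gen[OF _ _ _ _ _ M1 baseZ sG sGF]) (use at atF zv zM in \<open>auto simp: \<sigma>F_def\<close>)
      have tot: "IW n T ((emb (ncminus1 ?z) * emb (tr (fsubst \<sigma> G) :: ('a, nat) ncf) - emb (ncminus1 ?z) * emb (tr (fsubst \<sigma>T G) :: ('a, nat) ncf))
           + emb (ncminus1 ?z) * emb (tr (fsubst \<sigma>T G) :: ('a, nat) ncf) + 
           ((emb ?z * emb (tr (fsubst \<sigma> G) :: ('a, nat) ncf) - emb ?z * emb (tr (fsubst \<sigma>F G) :: ('a, nat) ncf))
           + emb ?z * emb (tr (fsubst \<sigma>F G) :: ('a, nat) ncf)))
         ((fsize G * (50 * M^5)) + (K1 * m^5 + ncf_size (ncminus1 ?z) + 1) + 1 + ((fsize G * (50 * M^5)) + (K0 * m^5 + ncf_size ?z + 1) + 1) + 1)"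
        by (intro IW_add SU SZ IW_lmul IT IF) (use zv in auto)
      show "IW n T (emb (tr (fsubst \<sigma> G) :: ('a, nat) ncf)) ((100 * 17^5 * fsize G^6 + K1 + K0 + 11) * m^5)"
      proof (rule IW_cong[OF tot])
        show "(emb (ncminus1 ?z) * emb (tr (fsubst \<sigma> G) :: ('a, nat) ncf) - emb (ncminus1 ?z) * emb (tr (fsubst \<sigma>T G) :: ('a, nat) ncf))
           + emb (ncminus1 ?z) * emb (tr (fsubst \<sigma>T G) :: ('a, nat) ncf) + 
           ((emb ?z * emb (tr (fsubst \<sigma> G) :: ('a, nat) ncf) - emb ?z * emb (tr (fsubst \<sigma>F G) :: ('a, nat) ncf))
           + emb ?z * emb (tr (fsubst \<sigma>F G) :: ('a, nat) ncf)) = emb (tr (fsubst \<sigma> G) :: ('a, nat) ncf)"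
          by (simp add: algebra_simps)
        show "(fsize G * (50 * M^5)) + (K1 * m^5 + ncf_size (ncminus1 ?z) + 1) + 1 + ((fsize G * (50 * M^5)) + (K0 * m^5 + ncf_size ?z + 1) + 1) + 1
            \<le> (100 * 17^5 * fsize G^6 + K1 + K0 + 11) * m^5"
          by (rule ar8[OF m1 f1 M_def order_refl order_refl]) (use zm in simp_all)
      qed
    qed
  qed
qed


primrec ANDL :: "fm list \<Rightarrow> fm" where
  "ANDL [] = FTrue"
| "ANDL (P # Ps) = FAnd P (ANDL Ps)"

definition Gr :: "rule \<Rightarrow> fm" where
  "Gr r = FOr (snd r) (FNot (ANDL (fst r)))"

lemma feval_ANDL: "feval a (ANDL Ps) = (\<forall>P\<in>set Ps. feval a P)"
  by (induction Ps) auto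

lemma taut_Gr: "sound_rule r \<Longrightarrow> tautology (Gr r)"
  unfolding tautology_def Gr_def sound_rule_def by (auto simp: feval_ANDL)

lemma atoms_ANDL: "atoms (ANDL Ps) = (\<Union>P\<in>set Ps. atoms P)"
  by (induction Ps) auto

lemma atoms_Gr: "atoms (Gr r) = atoms (snd r) \<union> (\<Union>P\<in>set (fst r). atoms P)"
  unfolding Gr_def by (simp add: atoms_ANDL)

lemma fsubst_FVar: "fsubst FVar A = A"
  by (induction A) auto

lemma fsize_pos: "1 \<le> fsize A"
  by (cases A) auto

lemma fsize_fsubst_le: "(\<And>i. fsize (\<rho> i) = 1) \<Longrightarrow> fsize (fsubst \<rho> A) \<le> fsize A"
  by (induction A) auto

lemma fsize_atom_le: "w \<in> atoms A \<Longrightarrow> fsize (\<sigma> w) \<le> fsize (fsubst \<sigma> A)"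
  by (induction A) auto

lemma atoms_atom_le: "w \<in> atoms A \<Longrightarrow> atoms (\<sigma> w) \<subseteq> atoms (fsubst \<sigma> A)"
  by (induction A) auto

lemma derivation_subst:
  assumes "derivation R {} \<pi>"
  shows "derivation R {} (map (fsubst \<rho>) \<pi>)"
  unfolding derivation_def
proof (intro allI impI)
  fix k assume k: "k < length (map (fsubst \<rho>) \<pi>)"
  then have "k < length \<pi>" by simp
  then obtain r \<sigma> where r: "r \<in> R" "fsubst \<sigma> (snd r) = \<pi> ! k"
     "\<forall>P\<in>set (fst r). \<exists>j<k. \<pi> ! j = fsubst \<sigma> P"
    using assms unfolding derivation_def by blast
  show "map (fsubst \<rho>) \<pi> ! k \<in> {} \<or> (\<exists>r\<in>R. \<exists>\<sigma>. fsubst \<sigma> (snd r) = map (fsubst \<rho>) \<pi> ! k \<and>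
        (\<forall>P\<in>set (fst r). \<exists>j<k. map (fsubst \<rho>) \<pi> ! j = fsubst \<sigma> P))"
  proof (intro disjI2 bexI[OF _ r(1)] exI[of _ "\<lambda>i. fsubst \<rho> (\<sigma> i)"] conjI ballI)
    show "fsubst (\<lambda>i. fsubst \<rho> (\<sigma> i)) (snd r) = map (fsubst \<rho>) \<pi> ! k"
      using r(2) \<open>k < length \<pi>\<close> by (simp add: fsubst_fsubst[symmetric])
    fix P assume "P \<in> set (fst r)"
    then obtain j where "j < k" "\<pi> ! j = fsubst \<sigma> P" using r(3) by blast
    then show "\<exists>j<k. map (fsubst \<rho>) \<pi> ! j = fsubst (\<lambda>i. fsubst \<rho> (\<sigma> i)) P"
      using \<open>k < length \<pi>\<close> by (intro exI[of _ j]) (simp add: fsubst_fsubst[symmetric])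
  qed
qed

definition rho :: "nat \<Rightarrow> nat \<Rightarrow> fm" where
  "rho n i = (if i \<in> {1..n} then FVar i else FTrue)"

lemma normalize_proof:
  assumes "frege_proof R \<pi> T" "atoms T \<subseteq> {1..n}"
  shows "frege_proof R (map (fsubst (rho n)) \<pi>) T"
    "proof_size (map (fsubst (rho n)) \<pi>) \<le> proof_size \<pi>"
    "\<And>A. A \<in> set (map (fsubst (rho n)) \<pi>) \<Longrightarrow> atoms A \<subseteq> {1..n}"
proof -
  have "fsubst (rho n) T = fsubst FVar T"
    by (rule fsubst_cong) (use assms(2) in \<open>auto simp: rho_def\<close>)
  then have eT: "fsubst (rho n) T = T" by (simp add: fsubst_FVar)
  show "frege_proof R (map (fsubst (rho n)) \<pi>) T"
    using assms(1) derivation_subst[of R \<pi> "rho n"] eT unfolding frege_proof_def by (auto simp: last_map)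
  have "sum_list (map fsize (map (fsubst (rho n)) \<pi>)) \<le> sum_list (map fsize \<pi>)"
    unfolding map_map by (rule sum_list_mono) (auto simp: rho_def intro: fsize_fsubst_le)
  then show "proof_size (map (fsubst (rho n)) \<pi>) \<le> proof_size \<pi>" by (simp add: proof_size_def)
  show "\<And>A. A \<in> set (map (fsubst (rho n)) \<pi>) \<Longrightarrow> atoms A \<subseteq> {1..n}"
    by (auto simp: atoms_fsubst rho_def split: if_splits)
qed

lemma rule_consts:
  assumes "finite R" "\<forall>r\<in>R. sound_rule r"
  shows "\<exists>K. \<forall>r\<in>R. length (fst r) \<le> K \<and> (\<forall>n T (\<sigma>::nat \<Rightarrow> fm) m. (\<forall>w. atoms (\<sigma> w) \<subseteq> {1..n}) \<longrightarrow>
     (\<forall>w. ncf_size (tr (\<sigma> w) :: ('a::comm_ring_1, nat) ncf) \<le> m) \<longrightarrow> 1 \<le> m \<longrightarrow>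
     IW n T (emb (tr (fsubst \<sigma> (Gr r)) :: ('a, nat) ncf)) (K * m^5))"
proof -
  have "\<forall>r\<in>R. \<exists>K. \<forall>n T (\<sigma>::nat \<Rightarrow> fm) m. (\<forall>w. atoms (\<sigma> w) \<subseteq> {1..n}) \<longrightarrow>
     (\<forall>w. ncf_size (tr (\<sigma> w) :: ('a::comm_ring_1, nat) ncf) \<le> m) \<longrightarrow> 1 \<le> m \<longrightarrow>
     IW n T (emb (tr (fsubst \<sigma> (Gr r)) :: ('a, nat) ncf)) (K * m^5)"
    using assms(2) taut_Gr taut_inst by blast
  then obtain Kf where Kf: "\<forall>r\<in>R. \<forall>n T (\<sigma>::nat \<Rightarrow> fm) m. (\<forall>w. atoms (\<sigma> w) \<subseteq> {1..n}) \<longrightarrow>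
     (\<forall>w. ncf_size (tr (\<sigma> w) :: ('a::comm_ring_1, nat) ncf) \<le> m) \<longrightarrow> 1 \<le> m \<longrightarrow>
     IW n T (emb (tr (fsubst \<sigma> (Gr r)) :: ('a, nat) ncf)) (Kf r * m^5)"
    by metis
  show ?thesis
  proof (intro exI[of _ "\<Sum>r\<in>R. Kf r + length (fst r)"] ballI conjI allI impI)
    fix r assume r: "r \<in> R"
    have le: "Kf r + length (fst r) \<le> (\<Sum>r\<in>R. Kf r + length (fst r))"
      by (rule member_le_sum[OF r _ assms(1)]) simp
    then show "length (fst r) \<le> (\<Sum>r\<in>R. Kf r + length (fst r))" by simp
    fix n T and \<sigma> :: "nat \<Rightarrow> fm" and m :: nat
    assume "\<forall>w. atoms (\<sigma> w) \<subseteq> {1..n}" "\<forall>w. ncf_size (tr (\<sigma> w) :: ('a::comm_ring_1, nat) ncf) \<le> m" "1 \<le> m"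
    then have "IW n T (emb (tr (fsubst \<sigma> (Gr r)) :: ('a, nat) ncf)) (Kf r * m^5)" using Kf r by blast
    moreover have "Kf r * m^5 \<le> (\<Sum>r\<in>R. Kf r + length (fst r)) * m^5" using le by simp
    ultimately show "IW n T (emb (tr (fsubst \<sigma> (Gr r)) :: ('a, nat) ncf)) ((\<Sum>r\<in>R. Kf r + length (fst r)) * m^5)"
      by (rule IW_mono)
  qed
qed


type_synonym 'a RR = "nat wrd \<Rightarrow>\<^sub>0 'a"

definition t :: "fm \<Rightarrow> 'a::comm_ring_1 RR" where
  "t A = emb (tr A)"

lemma t_simps[simp]:
  "t (FVar i) = xv i" "t FTrue = 0" "t FFalse = 1" "t (FNot A) = 1 - t A"
  "t (FOr A B) = t A * t B" "t (FAnd A B) = 1 - (1 - t A) * (1 - t B)"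
  by (simp_all add: t_def)

primrec Dc :: "fm list \<Rightarrow> nat \<Rightarrow> fm" where
  "Dc \<pi> 0 = FFalse"
| "Dc \<pi> (Suc j) = FOr (FNot (\<pi> ! j)) (Dc \<pi> j)"

lemma ncf_tr_le: "13 * fsize A \<le> N \<Longrightarrow> ncf_size (tr A) \<le> N"
  by (rule le_trans[OF size_tr])

lemma ar9: "1 \<le> (N::nat) \<Longrightarrow> f \<le> N \<Longrightarrow> f * (21 * N^4) + N + 1 \<le> 50 * N^5"
proof -
  assume a: "1 \<le> N" "f \<le> N"
  have "f * (21 * N^4) \<le> N * (21 * N^4)" using a by simp
  also have "\<dots> = 21 * N^5" by (simp add: power_Suc[symmetric] del: power_Suc)
  finally have 1: "f * (21 * N^4) \<le> 21 * N^5" .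
  have "N \<le> N^5" using a by (simp add: power_increasing[of 1 5 N, simplified])
  moreover have "1 \<le> N^5" using a by simp
  ultimately show ?thesis using 1 by linarith
qed

lemma ar10: "1 \<le> (N::nat) \<Longrightarrow> a \<le> N \<Longrightarrow> b \<le> N \<Longrightarrow> x + N + 1 + (3 * a^2 * (3 * b^2) + N + 1) + 3 \<le> x + 50 * N^5"
proof -
  assume h: "1 \<le> N" "a \<le> N" "b \<le> N"
  have x2: "a^2 \<le> N^2" and y2: "b^2 \<le> N^2" using h by (simp_all add: power_mono)
  have "a^2*b^2 \<le> N^2*N^2" by (rule mult_le_mono[OF x2 y2])
  moreover have "N^2*N^2 = N^4" by (simp flip: power_add)
  moreover have "N^4 \<le> N^5" using h by (simp add: power_increasing)
  moreover have "N \<le> N^5" using h by (simp add: power_increasing[of 1 5 N, simplified])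
  moreover have "1 \<le> N^5" using h by simp
  moreover have "3 * a^2 * (3 * b^2) = 9 * (a^2*b^2)" by simp
  ultimately show ?thesis by linarith
qed

locale chain =
  fixes \<pi> :: "fm list" and n :: nat and N :: nat
  assumes at: "\<And>A. A \<in> set \<pi> \<Longrightarrow> atoms A \<subseteq> {1..n}"
    and szL: "\<And>j. j < length \<pi> \<Longrightarrow> 13 * fsize (\<pi> ! j) + 4 \<le> N"
    and szD: "\<And>k. k \<le> length \<pi> \<Longrightarrow> 13 * fsize (Dc \<pi> k) \<le> N"
    and N1: "1 \<le> N"
begin

lemma atL: "j < length \<pi> \<Longrightarrow> atoms (\<pi> ! j) \<subseteq> {1..n}"
  using at by simp

lemma atD: "k \<le> length \<pi> \<Longrightarrow> atoms (Dc \<pi> k) \<subseteq> {1..n}"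
proof (induction k)
  case (Suc k)
  then have "atoms (\<pi> ! k) \<subseteq> {1..n}" by (intro atL) simp
  then show ?case using Suc by simp
qed simp

lemma trL: "j < length \<pi> \<Longrightarrow> ncf_size (tr (\<pi> ! j) :: ('a::comm_ring_1, nat) ncf) + 4 \<le> N"
proof -
  assume j: "j < length \<pi>"
  have "ncf_size (tr (\<pi> ! j) :: ('a, nat) ncf) \<le> 13 * fsize (\<pi> ! j)" by (rule size_tr)
  then show ?thesis using szL[OF j] by linarith
qed

lemma trD: "k \<le> length \<pi> \<Longrightarrow> ncf_size (tr (Dc \<pi> k) :: ('a::comm_ring_1, nat) ncf) \<le> N"
  by (rule ncf_tr_le[OF szD])

lemma Proj:
  "k \<le> length \<pi> \<Longrightarrow> j < k \<Longrightarrow> IW n T (t (\<pi> ! j) * t (Dc \<pi> k) :: 'a::comm_ring_1 RR) (k * (50 * N^5))"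
proof (induction k arbitrary: j)
  case 0 then show ?case by simp
next
  case (Suc k)
  have k: "k < length \<pi>" "k \<le> length \<pi>" using Suc by auto
  show ?case
  proof (cases "j = k")
    case True
    have B: "IW n T (emb (tr (\<pi> ! k) :: ('a, nat) ncf) * (1 - emb (tr (\<pi> ! k) :: ('a, nat) ncf))) (fsize (\<pi> ! k) * (21 * N^4))"
    proof (rule Bool)
      show "ncf_size (tr (\<pi> ! k) :: ('a, nat) ncf) \<le> N" using trL[where 'a='a, OF k(1)] by linarith
    qed (use atL[OF k(1)] in auto)
    have w: "IW n T (emb (tr (\<pi> ! k) :: ('a, nat) ncf) * (1 - emb (tr (\<pi> ! k) :: ('a, nat) ncf)) * emb (tr (Dc \<pi> k)))
               (fsize (\<pi> ! k) * (21 * N^4) + ncf_size (tr (Dc \<pi> k) :: ('a, nat) ncf) + 1)"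
      by (rule IW_rmul[OF B]) (use atD[OF k(2)] in simp)
    have f: "fsize (\<pi> ! k) \<le> N" using szL[OF k(1)] by linarith
    have "fsize (\<pi> ! k) * (21 * N^4) + ncf_size (tr (Dc \<pi> k) :: ('a, nat) ncf) + 1 \<le> fsize (\<pi> ! k) * (21 * N^4) + N + 1"
      using trD[where 'a='a, OF k(2)] by simp
    also have "\<dots> \<le> 50 * N^5" by (rule ar9[OF N1 f])
    also have "\<dots> \<le> Suc k * (50 * N^5)" by simp
    finally have le: "fsize (\<pi> ! k) * (21 * N^4) + ncf_size (tr (Dc \<pi> k) :: ('a, nat) ncf) + 1 \<le> Suc k * (50 * N^5)" .
    show ?thesis by (rule IW_cong[OF w _ le]) (simp add: True t_def algebra_simps)
  next
    case False
    then have jk: "j < k" using Suc by simp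
    have IH: "IW n T (t (\<pi> ! j) * t (Dc \<pi> k) :: 'a RR) (k * (50 * N^5))" using Suc jk by simp
    have j: "j < length \<pi>" using jk k by simp
    have C: "IW n T (emb (tr (\<pi> ! j) :: ('a, nat) ncf) * emb (tr (\<pi> ! k)) - emb (tr (\<pi> ! k)) * emb (tr (\<pi> ! j)))
        (3 * ncf_size (tr (\<pi> ! j) :: ('a, nat) ncf) ^ 2 * (3 * ncf_size (tr (\<pi> ! k) :: ('a, nat) ncf) ^ 2))"
      by (rule K2) (use atL[OF j] atL[OF k(1)] in auto)
    have w: "IW n T (emb (ncminus1 (tr (\<pi> ! k))) * (t (\<pi> ! j) * t (Dc \<pi> k)) -
       (emb (tr (\<pi> ! j) :: ('a, nat) ncf) * emb (tr (\<pi> ! k)) - emb (tr (\<pi> ! k)) * emb (tr (\<pi> ! j))) * emb (tr (Dc \<pi> k)))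
       (k * (50 * N^5) + ncf_size (ncminus1 (tr (\<pi> ! k) :: ('a, nat) ncf)) + 1 +
        (3 * ncf_size (tr (\<pi> ! j) :: ('a, nat) ncf) ^ 2 * (3 * ncf_size (tr (\<pi> ! k) :: ('a, nat) ncf) ^ 2) + ncf_size (tr (Dc \<pi> k) :: ('a, nat) ncf) + 1) + 3)"
      by (intro IW_diff IW_lmul IW_rmul IH C) (use atL[OF k(1)] atD[OF k(2)] in auto)
    have le: "k * (50 * N^5) + ncf_size (ncminus1 (tr (\<pi> ! k) :: ('a, nat) ncf)) + 1 +
        (3 * ncf_size (tr (\<pi> ! j) :: ('a, nat) ncf) ^ 2 * (3 * ncf_size (tr (\<pi> ! k) :: ('a, nat) ncf) ^ 2) + ncf_size (tr (Dc \<pi> k) :: ('a, nat) ncf) + 1) + 3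
       \<le> Suc k * (50 * N^5)"
    proof -
      have a: "ncf_size (tr (\<pi> ! j) :: ('a, nat) ncf) \<le> N" using trL[where 'a='a, OF j] by linarith
      have b: "ncf_size (tr (\<pi> ! k) :: ('a, nat) ncf) \<le> N" using trL[where 'a='a, OF k(1)] by linarith
      have "k * (50 * N^5) + ncf_size (ncminus1 (tr (\<pi> ! k) :: ('a, nat) ncf)) + 1 +
        (3 * ncf_size (tr (\<pi> ! j) :: ('a, nat) ncf) ^ 2 * (3 * ncf_size (tr (\<pi> ! k) :: ('a, nat) ncf) ^ 2) + ncf_size (tr (Dc \<pi> k) :: ('a, nat) ncf) + 1) + 3
        \<le> k * (50 * N^5) + N + 1 + (3 * ncf_size (tr (\<pi> ! j) :: ('a, nat) ncf) ^ 2 * (3 * ncf_size (tr (\<pi> ! k) :: ('a, nat) ncf) ^ 2) + N + 1) + 3"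
        using trL[where 'a='a, OF k(1)] trD[where 'a='a, OF k(2)] by simp
      also have "\<dots> \<le> k * (50 * N^5) + 50 * N^5" by (rule ar10[OF N1 a b])
      finally show ?thesis by simp
    qed
    show ?thesis by (rule IW_cong[OF w _ le]) (simp add: t_def algebra_simps)
  qed
qed

end


lemma ar11: "1 \<le> (N::nat) \<Longrightarrow> L \<le> K \<Longrightarrow> k \<le> N \<Longrightarrow>
  K * N^5 + N + 1 + (L * (N + 2 + k * (50 * N^5)) + 1 + N + 1) + 1 \<le> 60 * (K + 1) * N^6"
proof -
  assume h: "1 \<le> N" "L \<le> K" "k \<le> N"
  have N5: "N^5 \<le> N^6" using h by (simp add: power_increasing)
  have N1: "N \<le> N^6" using h by (simp add: power_increasing[of 1 6 N, simplified])
  have one: "1 \<le> N^6" using h by simp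
  have "k * (50 * N^5) \<le> N * (50 * N^5)" using h by simp
  also have "\<dots> = 50 * N^6" by (simp add: power_Suc[symmetric] del: power_Suc)
  finally have a: "k * (50 * N^5) \<le> 50 * N^6" .
  have "N + 2 + k * (50 * N^5) \<le> 53 * N^6" using a N1 one by linarith
  then have "L * (N + 2 + k * (50 * N^5)) \<le> K * (53 * N^6)" by (rule mult_le_mono[OF h(2)])
  moreover have "K * N^5 \<le> K * N^6" using N5 by simp
  moreover have "60 * (K + 1) * N^6 = 60 * (K * N^6) + 60 * N^6" by (simp add: algebra_simps)
  moreover have "K * (53 * N^6) = 53 * (K * N^6)" by simp
  ultimately show ?thesis using N1 one by linarith
qed

locale chain2 = chain +
  fixes R :: "rule set" and K :: nat
  assumes der: "derivation R {} \<pi>"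
    and lenN: "length \<pi> \<le> N"
    and KR: "\<forall>r\<in>R. length (fst r) \<le> K \<and> (\<forall>n T (\<sigma>::nat \<Rightarrow> fm) m. (\<forall>w. atoms (\<sigma> w) \<subseteq> {1..n}) \<longrightarrow>
     (\<forall>w. ncf_size (tr (\<sigma> w) :: ('a::comm_ring_1, nat) ncf) \<le> m) \<longrightarrow> 1 \<le> m \<longrightarrow>
     IW n T (emb (tr (fsubst \<sigma> (Gr r)) :: ('a, nat) ncf)) (K * m^5))"
begin

lemma Lprem:
  "k \<le> length \<pi> \<Longrightarrow> (\<forall>P\<in>set Ps. \<exists>j<k. \<pi> ! j = fsubst \<sigma> P) \<Longrightarrow>
   IW n T (t (Dc \<pi> k) - (1 - t (fsubst \<sigma> (ANDL Ps))) * t (Dc \<pi> k) :: 'a RR) (length Ps * (N + 2 + k * (50 * N^5)) + 1)"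
proof (induction Ps)
  case Nil
  show ?case using IW_zero by simp
next
  case (Cons P Ps)
  obtain j where j: "j < k" "\<pi> ! j = fsubst \<sigma> P" using Cons.prems by auto
  have jl: "j < length \<pi>" using j Cons.prems by simp
  have IH: "IW n T (t (Dc \<pi> k) - (1 - t (fsubst \<sigma> (ANDL Ps))) * t (Dc \<pi> k) :: 'a RR) (length Ps * (N + 2 + k * (50 * N^5)) + 1)"
    using Cons by simp
  have Pj: "IW n T (t (\<pi> ! j) * t (Dc \<pi> k) :: 'a RR) (k * (50 * N^5))"
    by (rule Proj) (use j Cons.prems in auto)
  have w: "IW n T (emb (ncminus1 (tr (\<pi> ! j))) * (t (Dc \<pi> k) - (1 - t (fsubst \<sigma> (ANDL Ps))) * t (Dc \<pi> k)) + t (\<pi> ! j) * t (Dc \<pi> k) :: 'a RR)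
     ((length Ps * (N + 2 + k * (50 * N^5)) + 1) + ncf_size (ncminus1 (tr (\<pi> ! j) :: ('a, nat) ncf)) + 1 + k * (50 * N^5) + 1)"
    by (intro IW_add IW_lmul IH Pj) (use atL[OF jl] in simp)
  have le: "(length Ps * (N + 2 + k * (50 * N^5)) + 1) + ncf_size (ncminus1 (tr (\<pi> ! j) :: ('a, nat) ncf)) + 1 + k * (50 * N^5) + 1
     \<le> length (P # Ps) * (N + 2 + k * (50 * N^5)) + 1"
    using trL[where 'a='a, OF jl] by simp
  show ?case by (rule IW_cong[OF w _ le]) (simp add: j(2) t_def algebra_simps)
qed

lemma Wk:
  assumes k: "k < length \<pi>"
  shows "IW n T (t (\<pi> ! k) * t (Dc \<pi> k) :: 'a RR) (60 * (K + 1) * N^6)"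
proof -
  obtain r \<sigma> where r: "r \<in> R" "fsubst \<sigma> (snd r) = \<pi> ! k"
     "\<forall>P\<in>set (fst r). \<exists>j<k. \<pi> ! j = fsubst \<sigma> P"
    using der k unfolding derivation_def by blast
  define \<sigma>' where "\<sigma>' = (\<lambda>w. if w \<in> atoms (Gr r) then \<sigma> w else FTrue)"
  have e: "fsubst \<sigma>' (Gr r) = fsubst \<sigma> (Gr r)" by (rule fsubst_cong) (simp add: \<sigma>'_def)
  have good: "atoms (\<sigma>' w) \<subseteq> {1..n} \<and> 13 * fsize (\<sigma>' w) \<le> N" for w
  proof (cases "w \<in> atoms (Gr r)")
    case False
    have "13 * fsize (\<pi> ! k) + 4 \<le> N" by (rule szL[OF k])
    moreover have "1 \<le> fsize (\<pi> ! k)" by (rule fsize_pos)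
    ultimately show ?thesis using False by (simp add: \<sigma>'_def)
  next
    case True
    then consider "w \<in> atoms (snd r)" | P where "P \<in> set (fst r)" "w \<in> atoms P" by (auto simp: atoms_Gr)
    then show ?thesis
    proof cases
      case 1
      have "atoms (\<sigma> w) \<subseteq> atoms (\<pi> ! k)" using atoms_atom_le[OF 1, of \<sigma>] r(2) by simp
      moreover have "fsize (\<sigma> w) \<le> fsize (\<pi> ! k)" using fsize_atom_le[OF 1, of \<sigma>] r(2) by simp
      ultimately show ?thesis using True atL[OF k] szL[OF k] by (auto simp: \<sigma>'_def)
    next
      case 2
      obtain j where j: "j < k" "\<pi> ! j = fsubst \<sigma> P" using r(3) 2(1) by blast
      have jl: "j < length \<pi>" using j k by simp
      have "atoms (\<sigma> w) \<subseteq> atoms (\<pi> ! j)" using atoms_atom_le[OF 2(2), of \<sigma>] j by simp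
      moreover have "fsize (\<sigma> w) \<le> fsize (\<pi> ! j)" using fsize_atom_le[OF 2(2), of \<sigma>] j by simp
      ultimately show ?thesis using True atL[OF jl] szL[OF jl] by (auto simp: \<sigma>'_def)
    qed
  qed
  have Kr: "length (fst r) \<le> K" using KR r(1) by blast
  have tau: "IW n T (emb (tr (fsubst \<sigma>' (Gr r)) :: ('a, nat) ncf)) (K * N^5)"
    using KR r(1) good N1 ncf_tr_le by blast
  have tau': "IW n T (t (\<pi> ! k) * (1 - t (fsubst \<sigma> (ANDL (fst r)))) :: 'a RR) (K * N^5)"
    using tau unfolding e by (simp add: Gr_def r(2) t_def)
  have LP: "IW n T (t (Dc \<pi> k) - (1 - t (fsubst \<sigma> (ANDL (fst r)))) * t (Dc \<pi> k) :: 'a RR) (length (fst r) * (N + 2 + k * (50 * N^5)) + 1)"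
    by (rule Lprem) (use k r(3) in auto)
  have w: "IW n T ((t (\<pi> ! k) * (1 - t (fsubst \<sigma> (ANDL (fst r))))) * emb (tr (Dc \<pi> k)) +
       emb (tr (\<pi> ! k)) * (t (Dc \<pi> k) - (1 - t (fsubst \<sigma> (ANDL (fst r)))) * t (Dc \<pi> k)) :: 'a RR)
     (K * N^5 + ncf_size (tr (Dc \<pi> k) :: ('a, nat) ncf) + 1 + ((length (fst r) * (N + 2 + k * (50 * N^5)) + 1) + ncf_size (tr (\<pi> ! k) :: ('a, nat) ncf) + 1) + 1)"
    by (intro IW_add IW_lmul IW_rmul tau' LP) (use atL[OF k] atD[of k] k in auto)
  have le: "K * N^5 + ncf_size (tr (Dc \<pi> k) :: ('a, nat) ncf) + 1 + ((length (fst r) * (N + 2 + k * (50 * N^5)) + 1) + ncf_size (tr (\<pi> ! k) :: ('a, nat) ncf) + 1) + 1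
     \<le> 60 * (K + 1) * N^6"
  proof -
    have "K * N^5 + ncf_size (tr (Dc \<pi> k) :: ('a, nat) ncf) + 1 + ((length (fst r) * (N + 2 + k * (50 * N^5)) + 1) + ncf_size (tr (\<pi> ! k) :: ('a, nat) ncf) + 1) + 1
      \<le> K * N^5 + N + 1 + (length (fst r) * (N + 2 + k * (50 * N^5)) + 1 + N + 1) + 1"
      using trD[where 'a='a, of k] trL[where 'a='a, OF k] k by simp
    also have "\<dots> \<le> 60 * (K + 1) * N^6" by (rule ar11[OF N1 Kr]) (use k lenN in simp)
    finally show ?thesis .
  qed
  show ?thesis by (rule IW_cong[OF w _ le]) (simp add: t_def algebra_simps)
qed

lemma Total:
  "k \<le> length \<pi> \<Longrightarrow> IW n T (1 - t (Dc \<pi> k) :: 'a RR) (k * (60 * (K + 1) * N^6 + 1) + 1)"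
proof (induction k)
  case 0 then show ?case using IW_zero by simp
next
  case (Suc k)
  have k: "k < length \<pi>" using Suc by simp
  have w: "IW n T ((1 - t (Dc \<pi> k)) + t (\<pi> ! k) * t (Dc \<pi> k) :: 'a RR) ((k * (60 * (K + 1) * N^6 + 1) + 1) + 60 * (K + 1) * N^6 + 1)"
    by (intro IW_add Wk k) (use Suc in simp)
  show ?case by (rule IW_cong[OF w]) (simp_all add: algebra_simps)
qed

end


lemma fsize_Dc: "fsize (Dc \<pi> k) = 1 + (\<Sum>i<k. fsize (\<pi> ! i) + 2)"
  by (induction k) auto

lemma psize_nth: "proof_size \<pi> = (\<Sum>i<length \<pi>. fsize (\<pi> ! i))"
  unfolding proof_size_def by (simp add: sum_list_sum_nth atLeast0LessThan)

lemma list_facts: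
  fixes \<pi> :: "fm list"
  defines "S \<equiv> proof_size \<pi>"
  shows "\<And>j. j < length \<pi> \<Longrightarrow> fsize (\<pi> ! j) \<le> S"
    and "length \<pi> \<le> S"
    and "\<And>k. k \<le> length \<pi> \<Longrightarrow> fsize (Dc \<pi> k) \<le> 3 * S + 1"
proof -
  show "\<And>j. j < length \<pi> \<Longrightarrow> fsize (\<pi> ! j) \<le> S"
    unfolding S_def proof_size_def using elem_le_sum_list[of _ "map fsize \<pi>"] by simp
  have "length \<pi> = (\<Sum>i<length \<pi>. 1)" by simp
  also have "\<dots> \<le> (\<Sum>i<length \<pi>. fsize (\<pi> ! i))" by (rule sum_mono) (rule fsize_pos)
  finally show "length \<pi> \<le> S" by (simp add: S_def psize_nth)
  fix k assume k: "k \<le> length \<pi>"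
  have "(\<Sum>i<k. fsize (\<pi> ! i) + 2) \<le> (\<Sum>i<k. 3 * fsize (\<pi> ! i))"
    by (rule sum_mono) (use fsize_pos in \<open>auto simp: algebra_simps\<close>)
  also have "\<dots> \<le> (\<Sum>i<length \<pi>. 3 * fsize (\<pi> ! i))"
    by (rule sum_mono2) (use k in auto)
  also have "\<dots> = 3 * S" by (simp add: S_def psize_nth sum_distrib_left)
  finally show "fsize (Dc \<pi> k) \<le> 3 * S + 1" by (simp add: fsize_Dc)
qed

lemma ar12: "1 \<le> (N::nat) \<Longrightarrow> L \<le> N \<Longrightarrow> a \<le> N \<Longrightarrow>
  1 + 1 + (((L * (60 * (K + 1) * N^6 + 1) + 1) + a + 1) + L * (50 * N^5) + 1) \<le> (60 * K + 118) * N^7"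
proof -
  assume h: "1 \<le> N" "L \<le> N" "a \<le> N"
  have "L * (60 * (K + 1) * N^6 + 1) \<le> N * (60 * (K + 1) * N^6 + 1)" using h(2) by (rule mult_le_mono1)
  also have "\<dots> = 60 * (K + 1) * (N * N^6) + N" by (simp add: algebra_simps)
  also have "N * N^6 = N^7" by (subst power_Suc[symmetric]) simp
  finally have 1: "L * (60 * (K + 1) * N^6 + 1) \<le> 60 * (K + 1) * N^7 + N" .
  have "L * (50 * N^5) \<le> N * (50 * N^5)" using h(2) by (rule mult_le_mono1)
  also have "\<dots> = 50 * N^6" by (simp add: power_Suc[symmetric] del: power_Suc)
  also have "\<dots> \<le> 50 * N^7" using h by (simp add: power_increasing)
  finally have 2: "L * (50 * N^5) \<le> 50 * N^7" .
  have N7: "N \<le> N^7" using h by (simp add: power_increasing[of 1 7 N, simplified])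
  have one: "1 \<le> N^7" using h by simp
  have "(60 * K + 118) * N^7 = 60 * (K + 1) * N^7 + 58 * N^7" by (simp add: algebra_simps)
  then show ?thesis using 1 2 N7 one h by linarith
qed

lemma main_gen:
  assumes "frege_system R"
  shows "\<exists>C. \<forall>T n \<pi>. tautology T \<longrightarrow> atoms T \<subseteq> {1..n} \<longrightarrow> frege_proof R \<pi> T \<longrightarrow>
     (\<exists>\<Phi> :: ('a::comm_ring_1, cvar) ncf. nc_ips_cert n T \<Phi> \<and> ncf_size \<Phi> \<le> C * proof_size \<pi> ^ 7)"
proof -
  have fR: "finite R" "\<forall>r\<in>R. sound_rule r" using assms unfolding frege_system_def by auto
  obtain K where KR: "\<forall>r\<in>R. length (fst r) \<le> K \<and> (\<forall>n T (\<sigma>::nat \<Rightarrow> fm) m. (\<forall>w. atoms (\<sigma> w) \<subseteq> {1..n}) \<longrightarrow>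
     (\<forall>w. ncf_size (tr (\<sigma> w) :: ('a::comm_ring_1, nat) ncf) \<le> m) \<longrightarrow> 1 \<le> m \<longrightarrow>
     IW n T (emb (tr (fsubst \<sigma> (Gr r)) :: ('a, nat) ncf)) (K * m^5))"
    using rule_consts[OF fR] by blast
  show ?thesis
  proof (intro exI[of _ "(60 * K + 118) * 52^7"] allI impI)
    fix T n \<pi>0
    assume taut: "tautology T" and atT: "atoms T \<subseteq> {1..n}" and fp: "frege_proof R \<pi>0 T"
    define \<pi> where "\<pi> = map (fsubst (rho n)) \<pi>0"
    have fp': "frege_proof R \<pi> T" and ps: "proof_size \<pi> \<le> proof_size \<pi>0"
      and atl: "\<And>A. A \<in> set \<pi> \<Longrightarrow> atoms A \<subseteq> {1..n}"
      using normalize_proof[OF fp atT] unfolding \<pi>_def by auto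
    have ne: "\<pi> \<noteq> []" and lastT: "last \<pi> = T" and der: "derivation R {} \<pi>"
      using fp' unfolding frege_proof_def by auto
    define S where "S = proof_size \<pi>"
    define N where "N = 52 * S"
    have lenS: "length \<pi> \<le> S" using list_facts(2)[of \<pi>] by (simp add: S_def)
    have S1: "1 \<le> S" using lenS ne by (cases \<pi>) auto
    have N1: "1 \<le> N" using S1 by (simp add: N_def)
    have ch: "chain \<pi> n N"
    proof
      show "\<And>A. A \<in> set \<pi> \<Longrightarrow> atoms A \<subseteq> {1..n}" by (rule atl)
      show "\<And>j. j < length \<pi> \<Longrightarrow> 13 * fsize (\<pi> ! j) + 4 \<le> N"
        using list_facts(1)[of _ \<pi>] S1 unfolding N_def S_def by fastforce
      show "\<And>k. k \<le> length \<pi> \<Longrightarrow> 13 * fsize (Dc \<pi> k) \<le> N"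
        using list_facts(3)[of _ \<pi>] S1 unfolding N_def S_def by fastforce
      show "1 \<le> N" by (rule N1)
    qed
    have ch2: "chain2 TYPE('a) \<pi> n N R K"
      by (intro chain2.intro ch chain2_axioms.intro der KR) (use lenS N_def in simp)
    let ?L = "length \<pi>"
    have lp: "?L - 1 < ?L" using ne by simp
    have Tl: "\<pi> ! (?L - 1) = T" using lastT ne by (simp add: last_conv_nth)
    have Tot: "IW n T (1 - t (Dc \<pi> ?L) :: 'a RR) (?L * (60 * (K + 1) * N^6 + 1) + 1)"
      by (rule chain2.Total[OF ch2]) simp
    have Pr0: "IW n T (t (\<pi> ! (?L - 1)) * t (Dc \<pi> ?L) :: 'a RR) (?L * (50 * N^5))"
      by (rule chain.Proj[OF ch]) (use lp in auto)
    have Pr: "IW n T (t T * t (Dc \<pi> ?L) :: 'a RR) (?L * (50 * N^5))"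
      using Pr0 by (simp only: Tl)
    have w: "IW n T (emb (tr T) * (1 - t (Dc \<pi> ?L)) + t T * t (Dc \<pi> ?L) :: 'a RR)
       (((?L * (60 * (K + 1) * N^6 + 1) + 1) + ncf_size (tr T :: ('a, nat) ncf) + 1) + ?L * (50 * N^5) + 1)"
      by (intro IW_add IW_lmul Tot Pr) (use atT in simp)
    have w2: "IW n T (emb (tr T :: ('a, nat) ncf))
       (((?L * (60 * (K + 1) * N^6 + 1) + 1) + ncf_size (tr T :: ('a, nat) ncf) + 1) + ?L * (50 * N^5) + 1)"
      by (rule IW_cong[OF w]) (simp_all add: t_def algebra_simps)
    then obtain \<Psi> :: "('a, cvar) ncf" where \<Psi>: "okv n \<Psi>" "emb (ncsubst sb0 \<Psi>) = 0"
      "emb (ncsubst (sb1 T) \<Psi>) = emb (tr T :: ('a, nat) ncf)"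
      "ncf_size \<Psi> \<le> ((?L * (60 * (K + 1) * N^6 + 1) + 1) + ncf_size (tr T :: ('a, nat) ncf) + 1) + ?L * (50 * N^5) + 1"
      unfolding IW_def by blast
    define \<Phi> where "\<Phi> = NAdd (NVar (Y AxT)) \<Psi>"
    have cert: "nc_ips_cert n T \<Phi>"
      unfolding nc_ips_cert_def
    proof (intro conjI)
      show "\<forall>v\<in>ncf_vars \<Phi>. case v of X i \<Rightarrow> 1 \<le> i \<and> i \<le> n | Y a \<Rightarrow> valid_ax n a"
        using \<Psi>(1) by (auto simp: \<Phi>_def okv_def)
      have "emb (ncsubst (\<lambda>v. case v of X i \<Rightarrow> NVar i | Y a \<Rightarrow> NConst 0) \<Phi>) = 0"
        using \<Psi>(2) by (simp add: \<Phi>_def sb0_def)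
      then show "ncpoly (ncsubst (\<lambda>v. case v of X i \<Rightarrow> NVar i | Y a \<Rightarrow> NConst 0) \<Phi>) = ncpoly_zero"
        by (rule ncpoly_zero_emb)
      have "emb (ncsubst (\<lambda>v. case v of X i \<Rightarrow> NVar i | Y a \<Rightarrow> ax_poly T a) \<Phi>) = 1"
        using \<Psi>(3) by (simp add: \<Phi>_def sb1_def)
      then show "ncpoly (ncsubst (\<lambda>v. case v of X i \<Rightarrow> NVar i | Y a \<Rightarrow> ax_poly T a) \<Phi>) = ncpoly_one"
        by (rule ncpoly_one_emb)
    qed
    have trT: "ncf_size (tr T :: ('a, nat) ncf) \<le> N"
    proof -
      have "ncf_size (tr (\<pi> ! (?L - 1)) :: ('a, nat) ncf) + 4 \<le> N" by (rule chain.trL[OF ch lp])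
      then show ?thesis using Tl by simp
    qed
    have "ncf_size \<Phi> = 1 + 1 + ncf_size \<Psi>" by (simp add: \<Phi>_def)
    also have "\<dots> \<le> 1 + 1 + (((?L * (60 * (K + 1) * N^6 + 1) + 1) + ncf_size (tr T :: ('a, nat) ncf) + 1) + ?L * (50 * N^5) + 1)"
      using \<Psi>(4) by simp
    also have "\<dots> \<le> (60 * K + 118) * N^7"
      by (rule ar12[OF N1 _ trT]) (use lenS N_def in simp)
    also have "\<dots> = (60 * K + 118) * 52^7 * S^7" by (simp add: N_def power_mult_distrib)
    also have "\<dots> \<le> (60 * K + 118) * 52^7 * proof_size \<pi>0 ^ 7"
      using ps by (simp add: S_def power_mono)
    finally show "\<exists>\<Phi> :: ('a, cvar) ncf. nc_ips_cert n T \<Phi> \<and> ncf_size \<Phi> \<le> (60 * K + 118) * 52^7 * proof_size \<pi>0 ^ 7"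
      using cert by blast
  qed
qed


lemma poly_part:
  assumes "frege_system R"
  shows "\<exists>p :: nat poly. \<forall>T n \<pi>. tautology T \<longrightarrow> atoms T \<subseteq> {1..n} \<longrightarrow> frege_proof R \<pi> T \<longrightarrow>
              (\<exists>\<Phi> :: ('a::comm_ring_1, cvar) ncf. nc_ips_cert n T \<Phi> \<and> ncf_size \<Phi> \<le> poly p (proof_size \<pi>))"
proof -
  obtain C where C: "\<forall>T n \<pi>. tautology T \<longrightarrow> atoms T \<subseteq> {1..n} \<longrightarrow> frege_proof R \<pi> T \<longrightarrow>
     (\<exists>\<Phi> :: ('a::comm_ring_1, cvar) ncf. nc_ips_cert n T \<Phi> \<and> ncf_size \<Phi> \<le> C * proof_size \<pi> ^ 7)"
    using main_gen[OF assms] by blast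
  show ?thesis
  proof (intro exI[of _ "monom C 7"] allI impI)
    fix T n \<pi> assume "tautology T" "atoms T \<subseteq> {1..n}" "frege_proof R \<pi> T"
    then obtain \<Phi> :: "('a, cvar) ncf" where "nc_ips_cert n T \<Phi>" "ncf_size \<Phi> \<le> C * proof_size \<pi> ^ 7"
      using C by blast
    then show "\<exists>\<Phi> :: ('a, cvar) ncf. nc_ips_cert n T \<Phi> \<and> ncf_size \<Phi> \<le> poly (monom C 7) (proof_size \<pi>)"
      by (auto simp: poly_monom)
  qed
qed

theorem theorem1p4:
  shows "(\<forall>R. frege_system R \<longrightarrow>
           (\<exists>p :: nat poly. \<forall>T n \<pi>. tautology T \<longrightarrow> atoms T \<subseteq> {1..n} \<longrightarrow> frege_proof R \<pi> T \<longrightarrow>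
              (\<exists>\<Phi> :: (rat, cvar) ncf. nc_ips_cert n T \<Phi> \<and> ncf_size \<Phi> \<le> poly p (proof_size \<pi>))))
       \<and> (\<forall>R. frege_system R \<longrightarrow>
           (\<exists>p :: nat poly. \<forall>T n \<pi>. tautology T \<longrightarrow> atoms T \<subseteq> {1..n} \<longrightarrow> frege_proof R \<pi> T \<longrightarrow>
              (\<exists>\<Phi> :: ('q::prime_card mod_ring, cvar) ncf. nc_ips_cert n T \<Phi> \<and> ncf_size \<Phi> \<le> poly p (proof_size \<pi>))))"
proof (intro conjI allI impI)
  fix R assume "frege_system R"
  then show "\<exists>p :: nat poly. \<forall>T n \<pi>. tautology T \<longrightarrow> atoms T \<subseteq> {1..n} \<longrightarrow> frege_proof R \<pi> T \<longrightarrow>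
              (\<exists>\<Phi> :: (rat, cvar) ncf. nc_ips_cert n T \<Phi> \<and> ncf_size \<Phi> \<le> poly p (proof_size \<pi>))"
    by (rule poly_part)
next
  fix R assume "frege_system R"
  then show "\<exists>p :: nat poly. \<forall>T n \<pi>. tautology T \<longrightarrow> atoms T \<subseteq> {1..n} \<longrightarrow> frege_proof R \<pi> T \<longrightarrow>
              (\<exists>\<Phi> :: ('q::prime_card mod_ring, cvar) ncf. nc_ips_cert n T \<Phi> \<and> ncf_size \<Phi> \<le> poly p (proof_size \<pi>))"
    by (rule poly_part)
qed


end
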